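(* Let $0<\alpha<1$ and let $p:\mathbb{R}\to\mathbb{R}$ be Lipschitz-continuous with $p_2\le p(t)\le p_1<0$ for all $t\in\mathbb{R}$, for some constants $p_2\le p_1<0$. Set $\eta=((\alpha-1)p_1)^{-1/\alpha}$. Let $t_0,v_0$ be real numbers with $v_0>\sqrt{2(p_1-p_2)\eta}$. Then there exists a unique maximal solution $u$ of $\ddot u-\frac{1}{u^\alpha}=p(t)$, $u>0$, defined on an interval $(t_0,t_1)$ with $t_0<t_1<+\infty$, satisfying $\lim_{t\to t_0^+}u(t)=\lim_{t\to t_1^-}u(t)=0$, $\lim_{t\to t_0^+}\dot u(t)=v_0$, and $\lim_{t\to t_1^-}\dot u(t)=v_1$ for some real number $v_1<0$. *)

theory Defs
  imports "HOL-Analysis.Analysis"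
begin

definition is_solution ::
  "real \<Rightarrow> (real \<Rightarrow> real) \<Rightarrow> (real \<Rightarrow> real) \<Rightarrow> (real \<Rightarrow> real) \<Rightarrow> real \<Rightarrow> real \<Rightarrow> bool" where
  "is_solution \<alpha> p u u' a b \<longleftrightarrow>
     (\<forall>t\<in>{a<..<b}. u t > 0 \<and> (u has_real_derivative u' t) (at t) \<and>
        (u' has_real_derivative (p t + 1 / (u t powr \<alpha>))) (at t))"

end

theory Submission
  imports Defs
begin

lemma exp_integral_bound:
  fixes K a s :: real
  assumes "K > 0" "a \<le> s"
  shows "((\<lambda>r. exp (K*(r-a))) has_integral (exp (K*(s-a)) - 1)/K) {a..s}"
proof -
  have "((\<lambda>r. exp (K*(r-a))) has_integral (exp (K*(s-a))/K - exp (K*(a-a))/K)) {a..s}"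
    apply (rule fundamental_theorem_of_calculus[OF assms(2)])
    using assms(1)
    by (auto intro!: derivative_eq_intros simp: has_real_derivative_iff_has_vector_derivative[symmetric])
  then show ?thesis by (simp add: diff_divide_distrib)
qed

lemma picard:
  fixes f :: "real \<Rightarrow> real \<times> real \<Rightarrow> real \<times> real" and g :: "real \<Rightarrow> real \<times> real"
  assumes ab: "a \<le> b" and L: "0 \<le> L"
    and fc: "continuous_on UNIV (\<lambda>z. f (fst z) (snd z))"
    and gc: "continuous_on {a..b} g"
    and lip: "\<And>s y z. norm (f s y - f s z) \<le> L * norm (y - z)"
  shows "\<exists>y. continuous_on {a..b} y \<and> (\<forall>s\<in>{a..b}. y s = g s + integral {a..s} (\<lambda>r. f r (y r)))"
proof -
  define K where "K = L + 1"
  have K: "K > 0" "L / K < 1" "0 \<le> L / K" using L by (auto simp: K_def)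
  define c where "c t = max a (min b t)" for t
  have c_in: "c t \<in> {a..b}" for t using ab by (auto simp: c_def)
  have c_id: "t \<in> {a..b} \<Longrightarrow> c t = t" for t by (auto simp: c_def)
  have cc: "continuous_on UNIV c" unfolding c_def by (intro continuous_intros)
  define Y where "Y z r = exp (K*(r-a)) *\<^sub>R apply_bcontfun z r" for z :: "(real, real \<times> real) bcontfun" and r
  define h where "h z s = exp (-K*(s-a)) *\<^sub>R (g s + integral {a..s} (\<lambda>r. f r (Y z r)))" for z s
  have Yc: "continuous_on UNIV (Y z)" for z
    unfolding Y_def by (intro continuous_intros) auto
  have Fc: "continuous_on UNIV (\<lambda>r. f r (Y z r))" for z
  proof -
    have "continuous_on UNIV ((\<lambda>z. f (fst z) (snd z)) \<circ> (\<lambda>r. (r, Y z r)))"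
      by (rule continuous_on_compose[OF _ continuous_on_subset[OF fc]]) (auto intro!: continuous_intros Yc)
    then show ?thesis by (simp add: o_def)
  qed
  have hc: "continuous_on {a..b} (h z)" for z
    unfolding h_def
    by (intro continuous_intros gc indefinite_integral_continuous_1 integrable_continuous_real
        continuous_on_subset[OF Fc]) auto
  have hcb: "(\<lambda>t. h z (c t)) \<in> bcontfun" for z
  proof -
    have "continuous_on UNIV (\<lambda>t. h z (c t))"
      by (rule continuous_on_compose2[OF hc cc]) (use c_in in auto)
    moreover have "bounded (range (\<lambda>t. h z (c t)))"
    proof -
      have "compact (h z ` {a..b})" by (rule compact_continuous_image[OF hc]) simp
      then have "bounded (h z ` {a..b})" by (rule compact_imp_bounded)
      moreover have "range (\<lambda>t. h z (c t)) \<subseteq> h z ` {a..b}" using c_in by auto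
      ultimately show ?thesis by (rule bounded_subset)
    qed
    ultimately show ?thesis by (simp add: bcontfun_def)
  qed
  define S where "S z = Bcontfun (\<lambda>t. h z (c t))" for z
  have S_app: "apply_bcontfun (S z) t = h z (c t)" for z t
    unfolding S_def using hcb by (simp add: Bcontfun_inverse)
  have contr: "dist (S z) (S w) \<le> (L/K) * dist z w" for z w
  proof (rule dist_bound)
    fix t
    define s where "s = c t"
    have s: "a \<le> s" "s \<le> b" using c_in[of t] by (auto simp: s_def)
    have i1: "(\<lambda>r. f r (Y z r)) integrable_on {a..s}" "(\<lambda>r. f r (Y w r)) integrable_on {a..s}"
      by (auto intro!: integrable_continuous_real continuous_on_subset[OF Fc])
    have bnd: "norm (f r (Y z r) - f r (Y w r)) \<le> L * dist z w * exp (K*(r-a))" for r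
    proof -
      have "norm (f r (Y z r) - f r (Y w r)) \<le> L * norm (Y z r - Y w r)" by (rule lip)
      also have "norm (Y z r - Y w r) = exp (K*(r-a)) * dist (apply_bcontfun z r) (apply_bcontfun w r)"
        by (simp add: Y_def dist_norm scaleR_diff_right[symmetric])
      also have "\<dots> \<le> exp (K*(r-a)) * dist z w" by (intro mult_left_mono dist_bounded) auto
      finally have "norm (f r (Y z r) - f r (Y w r)) \<le> L * (exp (K*(r-a)) * dist z w)"
        using L by (meson mult_left_mono order_trans)
      then show ?thesis by (simp add: mult_ac)
    qed
    have ie: "((\<lambda>r. L * dist z w * exp (K*(r-a))) has_integral L * dist z w * ((exp (K*(s-a)) - 1)/K)) {a..s}"
      by (intro has_integral_mult_right exp_integral_bound K s)
    have "norm (integral {a..s} (\<lambda>r. f r (Y z r)) - integral {a..s} (\<lambda>r. f r (Y w r)))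
        = norm (integral {a..s} (\<lambda>r. f r (Y z r) - f r (Y w r)))"
      using i1 by (simp add: integral_diff)
    also have "\<dots> \<le> L * dist z w * ((exp (K*(s-a)) - 1)/K)"
      using integral_norm_bound_integral[OF integrable_diff[OF i1] has_integral_integrable[OF ie]] bnd
        integral_unique[OF ie] by auto
    finally have I: "norm (integral {a..s} (\<lambda>r. f r (Y z r)) - integral {a..s} (\<lambda>r. f r (Y w r)))
        \<le> L * dist z w * ((exp (K*(s-a)) - 1)/K)" .
    have "dist (apply_bcontfun (S z) t) (apply_bcontfun (S w) t)
        = exp (-K*(s-a)) * norm (integral {a..s} (\<lambda>r. f r (Y z r)) - integral {a..s} (\<lambda>r. f r (Y w r)))"
      by (simp add: S_app s_def[symmetric] h_def dist_norm scaleR_diff_right[symmetric])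
    also have "\<dots> \<le> exp (-K*(s-a)) * (L * dist z w * ((exp (K*(s-a)) - 1)/K))"
      by (intro mult_left_mono I) auto
    also have "\<dots> = (L/K) * dist z w * (1 - exp (-K*(s-a)))"
    proof -
      have "exp (-K*(s-a)) * exp (K*(s-a)) = 1" by (simp add: exp_add[symmetric])
      then show ?thesis by (simp add: field_simps)
    qed
    also have "\<dots> \<le> (L/K) * dist z w"
    proof -
      have "0 \<le> L / K * dist z w" using K by (intro mult_nonneg_nonneg) auto
      then show ?thesis using mult_left_mono[of "1 - exp (-K*(s-a))" 1 "L / K * dist z w"] by simp
    qed
    finally show "dist (apply_bcontfun (S z) t) (apply_bcontfun (S w) t) \<le> L / K * dist z w" .
  qed
  obtain z where z: "S z = z" using banach_fix_type[of "L/K" S] K contr by blast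
  show ?thesis
  proof (intro exI conjI ballI)
    show "continuous_on {a..b} (Y z)" using Yc by (rule continuous_on_subset) auto
    fix s assume s: "s \<in> {a..b}"
    have "apply_bcontfun z s = h z s" using S_app[of z s] z c_id[OF s] by simp
    then show "Y z s = g s + integral {a..s} (\<lambda>r. f r (Y z r))"
    proof -
      have e: "exp (K*(s-a)) * exp (- (K*(s-a))) = 1" by (simp add: exp_add[symmetric])
      show ?thesis unfolding Y_def \<open>apply_bcontfun z s = h z s\<close> h_def
        by (simp only: scaleR_scaleR mult_minus_left e scaleR_one)
    qed
  qed
qed

lemma picard2:
  fixes F1 F2 :: "real \<Rightarrow> real \<Rightarrow> real \<Rightarrow> real" and g1 g2 :: "real \<Rightarrow> real"
  assumes ab: "a \<le> b" and L: "0 \<le> L"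
    and fc1: "continuous_on UNIV (\<lambda>z. F1 (fst z) (fst (snd z)) (snd (snd z)))"
    and fc2: "continuous_on UNIV (\<lambda>z. F2 (fst z) (fst (snd z)) (snd (snd z)))"
    and gc1: "continuous_on {a..b} g1" and gc2: "continuous_on {a..b} g2"
    and lip1: "\<And>s x y x' y'. \<bar>F1 s x y - F1 s x' y'\<bar> \<le> L * (\<bar>x - x'\<bar> + \<bar>y - y'\<bar>)"
    and lip2: "\<And>s x y x' y'. \<bar>F2 s x y - F2 s x' y'\<bar> \<le> L * (\<bar>x - x'\<bar> + \<bar>y - y'\<bar>)"
  shows "\<exists>y1 y2. continuous_on {a..b} y1 \<and> continuous_on {a..b} y2 \<and>
     (\<forall>s\<in>{a..b}. y1 s = g1 s + integral {a..s} (\<lambda>r. F1 r (y1 r) (y2 r)) \<and>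
                  y2 s = g2 s + integral {a..s} (\<lambda>r. F2 r (y1 r) (y2 r)))"
proof -
  define f where "f s y = (F1 s (fst y) (snd y), F2 s (fst y) (snd y))" for s and y :: "real \<times> real"
  define g where "g s = (g1 s, g2 s)" for s
  have fc: "continuous_on UNIV (\<lambda>z. f (fst z) (snd z))"
    unfolding f_def using fc1 fc2 by (intro continuous_on_Pair) auto
  have gc: "continuous_on {a..b} g" unfolding g_def by (intro continuous_on_Pair gc1 gc2)
  have lip: "norm (f s y - f s z) \<le> (4*L) * norm (y - z)" for s y z
  proof -
    have n1: "\<bar>fst y - fst z\<bar> \<le> norm (y - z)" "\<bar>snd y - snd z\<bar> \<le> norm (y - z)"
      using norm_fst_le[of "fst (y - z)" "snd (y - z)"] norm_snd_le[of "snd (y - z)" "fst (y - z)"]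
      unfolding prod.collapse by simp_all
    have "norm (f s y - f s z) \<le> \<bar>fst (f s y - f s z)\<bar> + \<bar>snd (f s y - f s z)\<bar>"
      using norm_Pair_le[of "fst (f s y - f s z)" "snd (f s y - f s z)"] unfolding prod.collapse by simp
    also have "\<dots> \<le> L * (\<bar>fst y - fst z\<bar> + \<bar>snd y - snd z\<bar>) + L * (\<bar>fst y - fst z\<bar> + \<bar>snd y - snd z\<bar>)"
      unfolding f_def by (intro add_mono) (auto intro: lip1 lip2)
    also have "\<dots> \<le> L * (2 * norm (y - z)) + L * (2 * norm (y - z))"
      using n1 L by (intro add_mono mult_left_mono) auto
    finally show ?thesis by simp
  qed
  obtain y where yc: "continuous_on {a..b} y" and yeq: "\<forall>s\<in>{a..b}. y s = g s + integral {a..s} (\<lambda>r. f r (y r))"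
    using picard[OF ab _ fc gc lip] L by auto
  have ci: "continuous_on {a..b} (\<lambda>r. f r (y r))"
    by (rule continuous_on_compose2[OF fc, of _ "\<lambda>r. (r, y r)", simplified])
       (auto intro!: continuous_intros yc)
  have int: "(\<lambda>r. f r (y r)) integrable_on {a..s}" if "s \<in> {a..b}" for s
    using that by (intro integrable_continuous_real continuous_on_subset[OF ci]) auto
  show ?thesis
  proof (intro exI conjI ballI)
    show "continuous_on {a..b} (\<lambda>s. fst (y s))" by (intro continuous_intros yc)
    show "continuous_on {a..b} (\<lambda>s. snd (y s))" by (intro continuous_intros yc)
    fix s assume s: "s \<in> {a..b}"
    have "fst (y s) = g1 s + fst (integral {a..s} (\<lambda>r. f r (y r)))"
      using yeq s by (simp add: g_def)
    also have "fst (integral {a..s} (\<lambda>r. f r (y r))) = integral {a..s} (\<lambda>r. fst (f r (y r)))"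
      using integral_linear[OF int[OF s] bounded_linear_fst] by (simp add: o_def)
    finally show "fst (y s) = g1 s + integral {a..s} (\<lambda>r. F1 r (fst (y r)) (snd (y r)))"
      by (simp add: f_def)
    have "snd (y s) = g2 s + snd (integral {a..s} (\<lambda>r. f r (y r)))"
      using yeq s by (simp add: g_def)
    also have "snd (integral {a..s} (\<lambda>r. f r (y r))) = integral {a..s} (\<lambda>r. snd (f r (y r)))"
      using integral_linear[OF int[OF s] bounded_linear_snd] by (simp add: o_def)
    finally show "snd (y s) = g2 s + integral {a..s} (\<lambda>r. F2 r (fst (y r)) (snd (y r)))"
      by (simp add: f_def)
  qed
qed

lemma deriv_integral_eq:
  fixes y g h :: "real \<Rightarrow> real"
  assumes "\<forall>s\<in>{a..b}. y s = g s + integral {a..s} h"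
    and "continuous_on {a..b} h" and s: "a < s" "s < b"
    and "(g has_real_derivative G) (at s)"
  shows "(y has_real_derivative G + h s) (at s)"
proof -
  have "((\<lambda>x. integral {a..x} h) has_real_derivative h s) (at s within {a..b})"
    using s by (intro integral_has_real_derivative assms) auto
  then have "((\<lambda>x. integral {a..x} h) has_real_derivative h s) (at s)"
    using s by (simp add: at_within_Icc_at)
  then have "((\<lambda>x. g x + integral {a..x} h) has_real_derivative G + h s) (at s)"
    by (intro DERIV_add assms)
  then show ?thesis
    by (rule has_field_derivative_transform_within_open[of _ _ _ "{a<..<b}"]) (use s assms(1) in auto)
qed

lemma uniq_sys:
  fixes Fa Fb :: "real \<Rightarrow> real \<Rightarrow> real \<Rightarrow> real" and ka kb ya yb za zb :: "real \<Rightarrow> real"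
  assumes ab: "a \<le> b" and L: "0 \<le> L"
    and lip1: "\<And>s x y x' y'. \<bar>Fa s x y - Fa s x' y'\<bar> \<le> L * (\<bar>x - x'\<bar> + \<bar>y - y'\<bar>)"
    and lip2: "\<And>s x y x' y'. \<bar>Fb s x y - Fb s x' y'\<bar> \<le> L * (\<bar>x - x'\<bar> + \<bar>y - y'\<bar>)"
    and c: "continuous_on {a..b} ya" "continuous_on {a..b} yb" "continuous_on {a..b} za" "continuous_on {a..b} zb"
    and dy1: "\<And>s. a < s \<Longrightarrow> s < b \<Longrightarrow> (ya has_real_derivative Fa s (ya s) (yb s) + ka s) (at s)"
    and dy2: "\<And>s. a < s \<Longrightarrow> s < b \<Longrightarrow> (yb has_real_derivative Fb s (ya s) (yb s) + kb s) (at s)"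
    and dz1: "\<And>s. a < s \<Longrightarrow> s < b \<Longrightarrow> (za has_real_derivative Fa s (za s) (zb s) + ka s) (at s)"
    and dz2: "\<And>s. a < s \<Longrightarrow> s < b \<Longrightarrow> (zb has_real_derivative Fb s (za s) (zb s) + kb s) (at s)"
    and i1: "ya a = za a" and i2: "yb a = zb a"
  shows "\<forall>s\<in>{a..b}. ya s = za s \<and> yb s = zb s"
proof
  fix t assume t: "t \<in> {a..b}"
  define E where "E s = exp (-(4*L)*(s-a)) * ((ya s - za s)\<^sup>2 + (yb s - zb s)\<^sup>2)" for s
  have Ec: "continuous_on {a..t} E"
    unfolding E_def using t by (intro continuous_intros continuous_on_subset[OF c(1)]
        continuous_on_subset[OF c(2)] continuous_on_subset[OF c(3)] continuous_on_subset[OF c(4)]) auto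
  have "E a \<ge> E t"
  proof (rule DERIV_nonpos_imp_decreasing_open[of a t E])
    show "a \<le> t" using t by auto
    show "continuous_on {a..t} E" by (rule Ec)
    fix s assume s: "a < s" "s < t"
    then have s': "a < s" "s < b" using t by auto
    define d1 where "d1 = ya s - za s"
    define d2 where "d2 = yb s - zb s"
    define e1 where "e1 = Fa s (ya s) (yb s) - Fa s (za s) (zb s)"
    define e2 where "e2 = Fb s (ya s) (yb s) - Fb s (za s) (zb s)"
    have D: "(E has_real_derivative exp (-(4*L)*(s-a)) * (-(4*L) * (d1\<^sup>2 + d2\<^sup>2) + (2*d1*e1 + 2*d2*e2))) (at s)"
      unfolding E_def
      by (rule derivative_eq_intros refl dy1[OF s'] dy2[OF s'] dz1[OF s'] dz2[OF s'])+
         (simp add: d1_def d2_def e1_def e2_def algebra_simps)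
    have e1b: "\<bar>e1\<bar> \<le> L * (\<bar>d1\<bar> + \<bar>d2\<bar>)" unfolding e1_def d1_def d2_def by (rule lip1)
    have e2b: "\<bar>e2\<bar> \<le> L * (\<bar>d1\<bar> + \<bar>d2\<bar>)" unfolding e2_def d1_def d2_def by (rule lip2)
    have "2*d1*e1 + 2*d2*e2 \<le> 2*\<bar>d1\<bar>*\<bar>e1\<bar> + 2*\<bar>d2\<bar>*\<bar>e2\<bar>"
    proof -
      have "d1*e1 \<le> \<bar>d1\<bar>*\<bar>e1\<bar>" "d2*e2 \<le> \<bar>d2\<bar>*\<bar>e2\<bar>"
        by (metis abs_ge_self abs_mult)+
      then show ?thesis by linarith
    qed
    also have "\<dots> \<le> 2*\<bar>d1\<bar>*(L * (\<bar>d1\<bar> + \<bar>d2\<bar>)) + 2*\<bar>d2\<bar>*(L * (\<bar>d1\<bar> + \<bar>d2\<bar>))"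
      by (intro add_mono mult_left_mono e1b e2b) auto
    also have "\<dots> = 2 * L * (\<bar>d1\<bar> + \<bar>d2\<bar>)\<^sup>2" by (simp add: power2_eq_square algebra_simps)
    also have "\<dots> \<le> 2 * L * (2 * (d1\<^sup>2 + d2\<^sup>2))"
    proof -
      have "(\<bar>d1\<bar> + \<bar>d2\<bar>)\<^sup>2 \<le> 2 * (d1\<^sup>2 + d2\<^sup>2)"
      proof -
        have "0 \<le> (\<bar>d1\<bar> - \<bar>d2\<bar>)\<^sup>2" by simp
        then show ?thesis unfolding power2_sum power2_diff power2_abs by (smt (verit))
      qed
      then show ?thesis using L by (intro mult_left_mono) auto
    qed
    finally have "-(4*L) * (d1\<^sup>2 + d2\<^sup>2) + (2*d1*e1 + 2*d2*e2) \<le> 0" by (simp add: algebra_simps)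
    then show "\<exists>y. (E has_real_derivative y) (at s) \<and> y \<le> 0"
      using D by (intro exI[of _ "exp (-(4*L)*(s-a)) * (-(4*L) * (d1\<^sup>2 + d2\<^sup>2) + (2*d1*e1 + 2*d2*e2))"])
        (auto simp: mult_nonneg_nonpos)
  qed
  moreover have "E a = 0" by (simp add: E_def i1 i2)
  ultimately have "E t \<le> 0" by simp
  then have "(ya t - za t)\<^sup>2 + (yb t - zb t)\<^sup>2 \<le> 0"
    by (simp add: E_def mult_le_0_iff)
  then show "ya t = za t \<and> yb t = zb t"
  proof -
    have "(ya t - za t)\<^sup>2 = 0" "(yb t - zb t)\<^sup>2 = 0"
      using \<open>(ya t - za t)\<^sup>2 + (yb t - zb t)\<^sup>2 \<le> 0\<close> zero_le_power2[of "ya t - za t"] zero_le_power2[of "yb t - zb t"]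
      by linarith+
    then show ?thesis by simp
  qed
qed

lemma inverse_phase:
  fixes T T' :: "real \<Rightarrow> real"
  assumes ab: "a < b" and Tc: "continuous_on {a..b} T"
    and dT: "\<And>x. a < x \<Longrightarrow> x < b \<Longrightarrow> (T has_real_derivative T' x) (at x)"
    and pos: "\<And>x. a < x \<Longrightarrow> x < b \<Longrightarrow> T' x > 0"
  obtains \<sigma> where "T a < T b" "continuous_on {T a..T b} \<sigma>"
    "\<And>t. t \<in> {T a..T b} \<Longrightarrow> \<sigma> t \<in> {a..b} \<and> T (\<sigma> t) = t"
    "\<And>x. x \<in> {a..b} \<Longrightarrow> \<sigma> (T x) = x"
    "\<And>t. T a < t \<Longrightarrow> t < T b \<Longrightarrow> a < \<sigma> t \<and> \<sigma> t < b \<and> (\<sigma> has_real_derivative inverse (T' (\<sigma> t))) (at t)"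
    "\<And>x y. a \<le> x \<Longrightarrow> x < y \<Longrightarrow> y \<le> b \<Longrightarrow> T x < T y"
proof -
  have mono: "T x < T y" if "a \<le> x" "x < y" "y \<le> b" for x y
    using that by (intro DERIV_pos_imp_increasing_open[of x y T])
      (auto intro!: continuous_on_subset[OF Tc] exI[of _ "T' _"] dT pos)
  have inj: "inj_on T {a..b}"
    by (rule inj_onI) (metis atLeastAtMost_iff linorder_neqE_linordered_idom mono order_less_irrefl)
  have img: "T ` {a..b} = {T a..T b}"
  proof
    show "T ` {a..b} \<subseteq> {T a..T b}"
      using mono by (force simp: le_less)
    show "{T a..T b} \<subseteq> T ` {a..b}"
    proof
      fix t assume "t \<in> {T a..T b}"
      then obtain x where "a \<le> x" "x \<le> b" "T x = t" using IVT'[of T a t b] Tc ab by auto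
      then show "t \<in> T ` {a..b}" by auto
    qed
  qed
  define \<sigma> where "\<sigma> = inv_into {a..b} T"
  have s1: "\<sigma> t \<in> {a..b} \<and> T (\<sigma> t) = t" if "t \<in> {T a..T b}" for t
    using that img unfolding \<sigma>_def by (metis f_inv_into_f inv_into_into)
  have s2: "\<sigma> (T x) = x" if "x \<in> {a..b}" for x
    using that inj unfolding \<sigma>_def by (simp add: inv_into_f_f)
  have sc: "continuous_on {T a..T b} \<sigma>"
    using continuous_on_inv[OF Tc compact_Icc, of \<sigma>] s2 img by auto
  have Tab: "T a < T b" using mono ab by auto
  show ?thesis
  proof (rule that[OF Tab sc s1 s2 _ mono])
    fix t assume t: "T a < t" "t < T b"
    then have st: "\<sigma> t \<in> {a..b}" "T (\<sigma> t) = t" using s1[of t] by auto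
    have "\<sigma> t \<noteq> a" "\<sigma> t \<noteq> b" using st t by auto
    then have st2: "a < \<sigma> t" "\<sigma> t < b" using st by auto
    have "isCont \<sigma> t"
      using continuous_on_interior[OF sc, of t] t by auto
    then have "(\<sigma> has_real_derivative inverse (T' (\<sigma> t))) (at t)"
      using dT[OF st2] pos[OF st2] t s1
      by (intro DERIV_inverse_function[where f=T and g=\<sigma> and a="T a" and b="T b"]) (auto simp: st)
    then show "a < \<sigma> t \<and> \<sigma> t < b \<and> (\<sigma> has_real_derivative inverse (T' (\<sigma> t))) (at t)"
      using st2 by auto
  qed
qed

lemma lip_trunc:
  fixes f f' :: "real \<Rightarrow> real"
  assumes d: "\<And>x. x \<ge> m \<Longrightarrow> (f has_real_derivative f' x) (at x)"
    and bd: "\<And>x. x \<ge> m \<Longrightarrow> \<bar>f' x\<bar> \<le> C"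
  shows "\<bar>f (max x m) - f (max y m)\<bar> \<le> C * \<bar>x - y\<bar>"
proof -
  have key: "\<bar>f b - f a\<bar> \<le> C * (b - a)" if ab0: "m \<le> a" "a \<le> b" for a b
  proof (cases "a = b")
    case True then show ?thesis by simp
  next
    case False
    then have "a < b" using that by auto
    then obtain z where z: "a < z" "z < b" "f b - f a = (b - a) * f' z"
    proof -
      have "\<exists>z>a. z < b \<and> f b - f a = (b - a) * f' z"
        by (rule MVT2[OF \<open>a < b\<close>]) (use d ab0 in auto)
      then show ?thesis using that by blast
    qed
    have "\<bar>f b - f a\<bar> = (b - a) * \<bar>f' z\<bar>" using z by (simp add: abs_mult)
    also have "\<dots> \<le> (b - a) * C" using bd[of z] z that by (intro mult_left_mono) auto
    finally show ?thesis by (simp add: mult.commute)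
  qed
  have C: "0 \<le> C" using bd[of m] by auto
  show ?thesis
  proof (cases "max x m \<le> max y m")
    case True
    then have "\<bar>f (max y m) - f (max x m)\<bar> \<le> C * (max y m - max x m)" by (intro key) auto
    also have "\<dots> \<le> C * \<bar>x - y\<bar>" using C by (intro mult_left_mono) auto
    finally show ?thesis by (simp add: abs_minus_commute)
  next
    case False
    then have "\<bar>f (max x m) - f (max y m)\<bar> \<le> C * (max x m - max y m)" by (intro key) auto
    also have "\<dots> \<le> C * \<bar>x - y\<bar>" using C by (intro mult_left_mono) auto
    finally show ?thesis .
  qed
qed

lemma lip_powr_trunc:
  fixes \<alpha> \<delta> :: real
  assumes "0 < \<alpha>" "0 < \<delta>"
  shows "\<bar>max x \<delta> powr (-\<alpha>) - max y \<delta> powr (-\<alpha>)\<bar> \<le> (\<alpha> * \<delta> powr (-\<alpha>-1)) * \<bar>x - y\<bar>"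
proof (rule lip_trunc[where f="\<lambda>x. x powr (-\<alpha>)" and f'="\<lambda>x. -\<alpha> * x powr (-\<alpha>-1)"])
  fix x :: real assume x: "\<delta> \<le> x"
  then show "((\<lambda>x. x powr (-\<alpha>)) has_real_derivative -\<alpha> * x powr (-\<alpha>-1)) (at x)"
    using assms by (auto intro!: derivative_eq_intros)
  have "x powr (-\<alpha>-1) \<le> \<delta> powr (-\<alpha>-1)" using x assms by (intro powr_mono2') auto
  then show "\<bar>-\<alpha> * x powr (-\<alpha>-1)\<bar> \<le> \<alpha> * \<delta> powr (-\<alpha>-1)"
    using assms by (simp add: abs_mult)
qed

lemma lip_isqrt_trunc:
  fixes m :: real
  assumes "0 < m"
  shows "\<bar>1 / sqrt (2 * max x m) - 1 / sqrt (2 * max y m)\<bar> \<le> (1 / (2 * m * sqrt (2 * m))) * \<bar>x - y\<bar>"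
proof (rule lip_trunc[where f="\<lambda>x. 1 / sqrt (2 * x)" and f'="\<lambda>x. - (1 / (2 * x * sqrt (2 * x)))"])
  fix x :: real assume x: "m \<le> x"
  then have xp: "x > 0" using assms by auto
  show "((\<lambda>x. 1 / sqrt (2 * x)) has_real_derivative - (1 / (2 * x * sqrt (2 * x)))) (at x)"
    using xp
    apply (auto intro!: derivative_eq_intros)
    apply (simp add: field_simps real_sqrt_mult)
    done
  have "2 * m * sqrt (2 * m) \<le> 2 * x * sqrt (2 * x)"
    using x assms by (intro mult_mono) auto
  then show "\<bar>- (1 / (2 * x * sqrt (2 * x)))\<bar> \<le> 1 / (2 * m * sqrt (2 * m))"
    using assms xp by (simp add: frac_le)
qed

lemma uniq_true:
  fixes p u v w z :: "real \<Rightarrow> real"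
  assumes ab: "a \<le> b" and al: "0 < \<alpha>"
    and c: "continuous_on {a..b} u" "continuous_on {a..b} v" "continuous_on {a..b} w" "continuous_on {a..b} z"
    and pos: "\<And>s. s \<in> {a..b} \<Longrightarrow> u s > 0" "\<And>s. s \<in> {a..b} \<Longrightarrow> w s > 0"
    and du: "\<And>s. a < s \<Longrightarrow> s < b \<Longrightarrow> (u has_real_derivative v s) (at s)"
    and dv: "\<And>s. a < s \<Longrightarrow> s < b \<Longrightarrow> (v has_real_derivative p s + u s powr (-\<alpha>)) (at s)"
    and dw: "\<And>s. a < s \<Longrightarrow> s < b \<Longrightarrow> (w has_real_derivative z s) (at s)"
    and dz: "\<And>s. a < s \<Longrightarrow> s < b \<Longrightarrow> (z has_real_derivative p s + w s powr (-\<alpha>)) (at s)"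
    and i1: "u a = w a" and i2: "v a = z a"
  shows "\<forall>s\<in>{a..b}. u s = w s \<and> v s = z s"
proof -
  obtain s1 where s1: "s1 \<in> {a..b}" "\<And>s. s \<in> {a..b} \<Longrightarrow> u s1 \<le> u s"
    using continuous_attains_inf[OF compact_Icc _ c(1)] ab by auto
  obtain s2 where s2: "s2 \<in> {a..b}" "\<And>s. s \<in> {a..b} \<Longrightarrow> w s2 \<le> w s"
    using continuous_attains_inf[OF compact_Icc _ c(3)] ab by auto
  define \<delta> where "\<delta> = min (u s1) (w s2)"
  have \<delta>: "\<delta> > 0" using pos s1 s2 by (auto simp: \<delta>_def)
  have ud: "u s \<ge> \<delta>" "w s \<ge> \<delta>" if "s \<in> {a..b}" for s
    using s1(2)[OF that] s2(2)[OF that] by (auto simp: \<delta>_def)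
  define L where "L = max 1 (\<alpha> * \<delta> powr (-\<alpha>-1))"
  have L: "0 \<le> L" by (simp add: L_def)
  define F1 where "F1 s x y = y" for s x y :: real
  define F2 where "F2 s x y = p s + max x \<delta> powr (-\<alpha>)" for s x y :: real
  show ?thesis
  proof (rule uniq_sys[where Fa=F1 and Fb=F2 and ka="\<lambda>_. 0" and kb="\<lambda>_. 0" and L=L, OF ab L _ _ c(1,2,3,4)])
    fix s x y x' y' :: real
    show "\<bar>F1 s x y - F1 s x' y'\<bar> \<le> L * (\<bar>x - x'\<bar> + \<bar>y - y'\<bar>)"
    proof -
      have "\<bar>y - y'\<bar> \<le> 1 * (\<bar>x - x'\<bar> + \<bar>y - y'\<bar>)" by simp
      also have "\<dots> \<le> L * (\<bar>x - x'\<bar> + \<bar>y - y'\<bar>)" by (rule mult_right_mono) (auto simp: L_def)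
      finally show ?thesis by (simp add: F1_def)
    qed
    have "\<bar>F2 s x y - F2 s x' y'\<bar> \<le> (\<alpha> * \<delta> powr (-\<alpha>-1)) * \<bar>x - x'\<bar>"
      unfolding F2_def using lip_powr_trunc[OF al \<delta>, of x x'] by simp
    also have "\<dots> \<le> L * (\<bar>x - x'\<bar> + \<bar>y - y'\<bar>)"
      unfolding L_def by (intro mult_mono) auto
    finally show "\<bar>F2 s x y - F2 s x' y'\<bar> \<le> L * (\<bar>x - x'\<bar> + \<bar>y - y'\<bar>)" .
  next
    fix s assume s: "a < s" "s < b"
    have m: "max (u s) \<delta> = u s" "max (w s) \<delta> = w s" using ud[of s] s by auto
    show "(u has_real_derivative F1 s (u s) (v s) + 0) (at s)" using du[OF s] by (simp add: F1_def)
    show "(v has_real_derivative F2 s (u s) (v s) + 0) (at s)" using dv[OF s] by (simp add: F2_def m)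
    show "(w has_real_derivative F1 s (w s) (z s) + 0) (at s)" using dw[OF s] by (simp add: F1_def)
    show "(z has_real_derivative F2 s (w s) (z s) + 0) (at s)" using dz[OF s] by (simp add: F2_def m)
  qed (use i1 i2 in auto)
qed

lemma cont_F3:
  assumes "continuous_on UNIV (\<lambda>z. F (fst z) (fst (snd z)) (snd (snd z)))"
    "continuous_on S y1" "continuous_on S y2"
  shows "continuous_on S (\<lambda>r. F r (y1 r) (y2 r))"
proof -
  have "continuous_on S (\<lambda>r. (r, y1 r, y2 r))" by (intro continuous_intros assms(2,3))
  then show ?thesis using continuous_on_compose2[OF assms(1), of S "\<lambda>r. (r, y1 r, y2 r)"] by auto
qed

lemma integral_bounds:
  fixes h :: "real \<Rightarrow> real"
  assumes "continuous_on {a..b} h" "a \<le> b" "\<And>r. r \<in> {a..b} \<Longrightarrow> lo \<le> h r \<and> h r \<le> hi"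
  shows "lo * (b - a) \<le> integral {a..b} h \<and> integral {a..b} h \<le> hi * (b - a)"
proof -
  have i: "h integrable_on {a..b}" using assms by (intro integrable_continuous_real)
  have "integral {a..b} (\<lambda>_. lo) \<le> integral {a..b} h"
    using assms by (intro integral_le i) auto
  moreover have "integral {a..b} h \<le> integral {a..b} (\<lambda>_. hi)"
    using assms by (intro integral_le i) auto
  ultimately show ?thesis using assms(2) by (simp add: mult.commute)
qed

locale setting =
  fixes \<alpha> p1 p2 t0 v0 Lp :: real and p :: "real \<Rightarrow> real"
  assumes al0: "0 < \<alpha>" and al1: "\<alpha> < 1"
    and lipp: "Lp-lipschitz_on UNIV p"
    and p21: "p2 \<le> p1" and p1n: "p1 < 0"
    and pb: "\<And>t. p2 \<le> p t \<and> p t \<le> p1"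
    and v0: "v0 > sqrt (2 * (p1 - p2) * (((\<alpha> - 1) * p1) powr (-1 / \<alpha>)))"
begin

definition "q = - p1"
definition "\<eta> = ((\<alpha> - 1) * p1) powr (-1 / \<alpha>)"
definition "c = v0\<^sup>2 / 2 - (p1 - p2) * \<eta>"
definition "c1 = c / 2"
definition "X1 = \<eta> + c / (2 * (- p2))"
definition "G x = x powr (1 - \<alpha>) / (1 - \<alpha>) - q * x" for x

lemma q_pos: "q > 0" using p1n by (simp add: q_def)
lemma Lp: "0 \<le> Lp" using lipp by (simp add: lipschitz_on_def)
lemma p_lip: "\<bar>p x - p y\<bar> \<le> Lp * \<bar>x - y\<bar>"
  using lipp by (auto simp: lipschitz_on_def dist_real_def)
lemma p_cont: "continuous_on S p"
  using lipschitz_on_continuous_on[OF lipp] continuous_on_subset by blast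

lemma base_pos: "(\<alpha> - 1) * p1 = (1 - \<alpha>) * q" "(1 - \<alpha>) * q > 0"
  using al1 q_pos by (auto simp: q_def algebra_simps)

lemma eta_pos: "\<eta> > 0" using base_pos al1 q_pos by (simp add: \<eta>_def)

lemma eta_powr: "\<eta> powr (-\<alpha>) = (1 - \<alpha>) * q"
proof -
  have "\<eta> powr (-\<alpha>) = ((1 - \<alpha>) * q) powr ((-1/\<alpha>) * (-\<alpha>))"
    unfolding \<eta>_def base_pos(1) by (simp add: powr_powr)
  also have "(-1/\<alpha>) * (-\<alpha>) = 1" using al0 by simp
  finally show ?thesis using base_pos by simp
qed

lemma eta_powr2: "\<eta> powr (1 - \<alpha>) = (1 - \<alpha>) * q * \<eta>"
proof -
  have "\<eta> powr (1 - \<alpha>) = \<eta> powr 1 * \<eta> powr (-\<alpha>)" using powr_add[of \<eta> 1 "-\<alpha>"] by simp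
  then show ?thesis using eta_pos eta_powr by simp
qed

lemma G_eta: "G \<eta> = 0"
  using eta_powr2 al1 by (simp add: G_def)

lemma c_pos: "c > 0"
proof -
  have nn: "0 \<le> 2 * (p1 - p2) * \<eta>" using p21 eta_pos by simp
  moreover have "sqrt (2 * (p1 - p2) * \<eta>) < v0" using v0 by (simp add: \<eta>_def)
  moreover have "(sqrt (2 * (p1 - p2) * \<eta>))\<^sup>2 < v0\<^sup>2"
    using \<open>sqrt (2 * (p1 - p2) * \<eta>) < v0\<close> nn by (intro power_strict_mono) auto
  ultimately have "2 * (p1 - p2) * \<eta> < v0\<^sup>2" by simp
  then show ?thesis unfolding c_def by linarith
qed

lemma v0_pos: "v0 > 0"
proof -
  have "0 \<le> sqrt (2 * (p1 - p2) * (((\<alpha> - 1) * p1) powr (-1 / \<alpha>)))"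
    using p21 by (intro real_sqrt_ge_zero mult_nonneg_nonneg) auto
  then show ?thesis using v0 by linarith
qed

lemma G_nonneg: assumes "0 \<le> x" "x \<le> \<eta>" shows "q * x \<le> x powr (1 - \<alpha>) / (1 - \<alpha>)"
proof (cases "x = 0")
  case True then show ?thesis by simp
next
  case False
  then have x: "x > 0" using assms by auto
  have "x powr (1 - \<alpha>) = x * x powr (-\<alpha>)" using x powr_add[of x 1 "-\<alpha>"] by simp
  also have "x powr (-\<alpha>) \<ge> \<eta> powr (-\<alpha>)" using x assms al0 by (intro powr_mono2') auto
  then have "x * x powr (-\<alpha>) \<ge> x * ((1 - \<alpha>) * q)" using x eta_powr by (intro mult_left_mono) auto
  finally have "q * x * (1 - \<alpha>) \<le> x powr (1 - \<alpha>)" by (simp add: mult_ac)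
  then show ?thesis using al1 by (subst pos_le_divide_eq) auto
qed

lemma G_ge_eta: assumes "\<eta> \<le> x" shows "q * \<eta> \<le> x powr (1 - \<alpha>) / (1 - \<alpha>)"
proof -
  have "\<eta> powr (1 - \<alpha>) \<le> x powr (1 - \<alpha>)" using assms eta_pos al1 by (intro powr_mono2) auto
  then have "q * \<eta> * (1 - \<alpha>) \<le> x powr (1 - \<alpha>)" using eta_powr2 by (simp add: mult_ac)
  then show ?thesis using al1 by (subst pos_le_divide_eq) auto
qed

end

context setting begin

lemma c1_pos: "c1 > 0" using c_pos by (simp add: c1_def)
lemma X1_gt: "\<eta> < X1"
proof -
  have "c / (2 * p2) < 0" using c_pos p21 p1n by (intro divide_pos_neg) auto
  then show ?thesis by (simp add: X1_def)
qed

lemma phase1: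
  obtains \<tau>1 W1 where
   "continuous_on {0..X1} \<tau>1" "continuous_on {0..X1} W1" "\<tau>1 0 = t0" "W1 0 = v0\<^sup>2 / 2"
   "\<And>x. x \<in> {0..X1} \<Longrightarrow> W1 x \<ge> c1"
   "\<And>x. x \<in> {0..\<eta>} \<Longrightarrow> W1 x \<ge> c"
   "\<And>x. 0 < x \<Longrightarrow> x < X1 \<Longrightarrow> (\<tau>1 has_real_derivative 1 / sqrt (2 * W1 x)) (at x)"
   "\<And>x. 0 < x \<Longrightarrow> x < X1 \<Longrightarrow> (W1 has_real_derivative p (\<tau>1 x) + x powr (-\<alpha>)) (at x)"
proof -
  have c1: "c1 > 0" by (rule c1_pos)
  have X1: "0 \<le> X1" using X1_gt eta_pos by simp
  define L1 where "L1 = max Lp (1 / (2 * c1 * sqrt (2 * c1)))"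
  have L1: "0 \<le> L1" using Lp by (auto simp: L1_def le_max_iff_disj)
  define F1 where "F1 s x y = 1 / sqrt (2 * max y c1)" for s x y :: real
  define F2 where "F2 s x y = p x" for s x y :: real
  define g1 where "g1 s = t0" for s :: real
  define g2 where "g2 s = v0\<^sup>2 / 2 + s powr (1 - \<alpha>) / (1 - \<alpha>)" for s :: real
  have fc1: "continuous_on UNIV (\<lambda>z. F1 (fst z) (fst (snd z)) (snd (snd z)))"
    unfolding F1_def using c1 by (intro continuous_intros) (auto simp: max_def)
  have fc2: "continuous_on UNIV (\<lambda>z. F2 (fst z) (fst (snd z)) (snd (snd z)))"
    unfolding F2_def by (intro continuous_on_compose2[OF p_cont] continuous_intros) auto
  have gc1: "continuous_on {0..X1} g1" unfolding g1_def by (intro continuous_intros)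
  have gc2: "continuous_on {0..X1} g2" unfolding g2_def using al1
    by (intro continuous_intros continuous_on_powr') auto
  have lip1: "\<bar>F1 s x y - F1 s x' y'\<bar> \<le> L1 * (\<bar>x - x'\<bar> + \<bar>y - y'\<bar>)" for s x y x' y'
  proof -
    have "\<bar>F1 s x y - F1 s x' y'\<bar> \<le> (1 / (2 * c1 * sqrt (2 * c1))) * \<bar>y - y'\<bar>"
      unfolding F1_def by (rule lip_isqrt_trunc[OF c1])
    also have "\<dots> \<le> L1 * (\<bar>x - x'\<bar> + \<bar>y - y'\<bar>)"
      using Lp unfolding L1_def by (intro mult_mono) (auto simp: le_max_iff_disj)
    finally show ?thesis .
  qed
  have lip2: "\<bar>F2 s x y - F2 s x' y'\<bar> \<le> L1 * (\<bar>x - x'\<bar> + \<bar>y - y'\<bar>)" for s x y x' y'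
  proof -
    have "\<bar>F2 s x y - F2 s x' y'\<bar> \<le> Lp * \<bar>x - x'\<bar>" unfolding F2_def by (rule p_lip)
    also have "\<dots> \<le> L1 * (\<bar>x - x'\<bar> + \<bar>y - y'\<bar>)"
      using Lp unfolding L1_def by (intro mult_mono) (auto simp: le_max_iff_disj)
    finally show ?thesis .
  qed
  obtain \<tau>1 W1 where tc: "continuous_on {0..X1} \<tau>1" and Wc: "continuous_on {0..X1} W1"
    and eqs: "\<forall>s\<in>{0..X1}. \<tau>1 s = g1 s + integral {0..s} (\<lambda>r. F1 r (\<tau>1 r) (W1 r)) \<and>
                  W1 s = g2 s + integral {0..s} (\<lambda>r. F2 r (\<tau>1 r) (W1 r))"
    using picard2[OF X1 L1 fc1 fc2 gc1 gc2 lip1 lip2] by blast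
  have ic1: "continuous_on {0..X1} (\<lambda>r. F1 r (\<tau>1 r) (W1 r))" by (rule cont_F3[OF fc1 tc Wc])
  have ic2: "continuous_on {0..X1} (\<lambda>r. F2 r (\<tau>1 r) (W1 r))" by (rule cont_F3[OF fc2 tc Wc])
  have t0: "\<tau>1 0 = t0" using eqs X1 by (auto simp: g1_def)
  have W0: "W1 0 = v0\<^sup>2 / 2" using eqs X1 by (auto simp: g2_def)
  have lb: "W1 x \<ge> v0\<^sup>2 / 2 + x powr (1 - \<alpha>) / (1 - \<alpha>) + p2 * x" if x: "x \<in> {0..X1}" for x
  proof -
    have "p2 * (x - 0) \<le> integral {0..x} (\<lambda>r. F2 r (\<tau>1 r) (W1 r))"
      using integral_bounds[OF continuous_on_subset[OF ic2], of 0 x p2 p1] x pb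
      by (auto simp: F2_def)
    then show ?thesis using eqs x by (auto simp: g2_def)
  qed
  have Wc0: "W1 x \<ge> c" if x: "x \<in> {0..\<eta>}" for x
  proof -
    have x': "x \<in> {0..X1}" using x X1_gt by auto
    have "q * x \<le> x powr (1 - \<alpha>) / (1 - \<alpha>)" using G_nonneg x by auto
    moreover have "(p1 - p2) * x \<le> (p1 - p2) * \<eta>" using x p21 by (intro mult_left_mono) auto
    moreover have "c = v0\<^sup>2/2 - (p1 - p2) * \<eta>" by (simp add: c_def)
    moreover have "q*x = -(p1*x)" "(p1 - p2) * x = p1*x - p2*x" by (simp_all add: q_def algebra_simps)
    ultimately show ?thesis using lb[OF x'] by linarith
  qed
  have Wc1: "W1 x \<ge> c1" if x: "x \<in> {0..X1}" for x
  proof (cases "x \<le> \<eta>")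
    case True then show ?thesis using Wc0[of x] x c_pos by (auto simp: c1_def)
  next
    case False
    have "q * \<eta> \<le> x powr (1 - \<alpha>) / (1 - \<alpha>)" using G_ge_eta False by auto
    moreover have "(- p2) * (x - \<eta>) \<le> (- p2) * (c / (2 * (- p2)))"
      using x p21 p1n False by (intro mult_left_mono) (auto simp: X1_def)
    moreover have "(- p2) * (c / (2 * (- p2))) = c / 2" using p21 p1n by simp
    moreover have "(- p2) * (x - \<eta>) = p2*\<eta> - p2*x" by (simp add: algebra_simps)
    moreover have "c = v0\<^sup>2/2 - p1*\<eta> + p2*\<eta>" by (simp add: c_def algebra_simps)
    moreover have "q*\<eta> = -(p1*\<eta>)" by (simp add: q_def)
    ultimately show ?thesis using lb[OF x] unfolding c1_def by linarith
  qed
  show ?thesis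
  proof (rule that[OF tc Wc t0 W0 Wc1 Wc0])
    fix x assume x: "0 < x" "x < X1"
    have m: "max (W1 x) c1 = W1 x" using Wc1[of x] x by auto
    have "(\<tau>1 has_real_derivative 0 + F1 x (\<tau>1 x) (W1 x)) (at x)"
      by (rule deriv_integral_eq[OF _ ic1 x]) (use eqs in \<open>auto simp: g1_def\<close>)
    then show "(\<tau>1 has_real_derivative 1 / sqrt (2 * W1 x)) (at x)" by (simp add: F1_def m)
    have dg2: "(g2 has_real_derivative x powr (-\<alpha>)) (at x)"
    proof -
      have "(g2 has_real_derivative 0 + (1 - \<alpha>) * x powr (1 - \<alpha> - 1) / (1 - \<alpha>)) (at x)"
        unfolding g2_def using x by (intro DERIV_add DERIV_cdivide has_real_derivative_powr DERIV_const) auto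
      moreover have "0 + (1 - \<alpha>) * x powr (1 - \<alpha> - 1) / (1 - \<alpha>) = x powr (-\<alpha>)" using al1 by simp
      ultimately show ?thesis by simp
    qed
    have "(W1 has_real_derivative x powr (-\<alpha>) + F2 x (\<tau>1 x) (W1 x)) (at x)"
      by (rule deriv_integral_eq[OF _ ic2 x dg2]) (use eqs in auto)
    then show "(W1 has_real_derivative p (\<tau>1 x) + x powr (-\<alpha>)) (at x)" by (simp add: F2_def add.commute)
  qed
qed

end

lemma inv_solution:
  fixes T W p :: "real \<Rightarrow> real" and \<kappa> d \<alpha> :: real
  assumes ab: "a < b" and Tc: "continuous_on {a..b} T" and Wc: "continuous_on {a..b} W"
    and Wp: "\<And>x. x \<in> {a..b} \<Longrightarrow> W x > 0"
    and dT: "\<And>s. a < s \<Longrightarrow> s < b \<Longrightarrow> (T has_real_derivative 1 / sqrt (2 * W s)) (at s)"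
    and dW: "\<And>s. a < s \<Longrightarrow> s < b \<Longrightarrow> (W has_real_derivative \<kappa> * (p (T s) + (d + \<kappa> * s) powr (-\<alpha>))) (at s)"
    and k: "\<kappa> * \<kappa> = 1"
  obtains \<sigma> where "T a < T b" "continuous_on {T a..T b} \<sigma>"
    "\<And>t. t \<in> {T a..T b} \<Longrightarrow> \<sigma> t \<in> {a..b} \<and> T (\<sigma> t) = t"
    "\<And>x. x \<in> {a..b} \<Longrightarrow> \<sigma> (T x) = x"
    "\<And>t. T a < t \<Longrightarrow> t < T b \<Longrightarrow> a < \<sigma> t \<and> \<sigma> t < b"
    "\<And>t. T a < t \<Longrightarrow> t < T b \<Longrightarrow> ((\<lambda>t. d + \<kappa> * \<sigma> t) has_real_derivative \<kappa> * sqrt (2 * W (\<sigma> t))) (at t)"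
    "\<And>t. T a < t \<Longrightarrow> t < T b \<Longrightarrow> ((\<lambda>t. \<kappa> * sqrt (2 * W (\<sigma> t))) has_real_derivative p t + (d + \<kappa> * \<sigma> t) powr (-\<alpha>)) (at t)"
    "\<And>x y. a \<le> x \<Longrightarrow> x < y \<Longrightarrow> y \<le> b \<Longrightarrow> T x < T y"
proof -
  obtain \<sigma> where s1: "T a < T b" and s2: "continuous_on {T a..T b} \<sigma>"
    and s3: "\<And>t. t \<in> {T a..T b} \<Longrightarrow> \<sigma> t \<in> {a..b} \<and> T (\<sigma> t) = t"
    and s4: "\<And>x. x \<in> {a..b} \<Longrightarrow> \<sigma> (T x) = x"
    and s5: "\<And>t. T a < t \<Longrightarrow> t < T b \<Longrightarrow> a < \<sigma> t \<and> \<sigma> t < b \<and> (\<sigma> has_real_derivative inverse (1 / sqrt (2 * W (\<sigma> t)))) (at t)"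
    and s6: "\<And>x y. a \<le> x \<Longrightarrow> x < y \<Longrightarrow> y \<le> b \<Longrightarrow> T x < T y"
    using inverse_phase[of a b T "\<lambda>s. 1 / sqrt (2 * W s)", OF ab Tc dT] Wp by auto
  show ?thesis
  proof (rule that[OF s1 s2 s3 s4 _ _ _ s6])
    fix t assume t: "T a < t" "t < T b"
    then show "a < \<sigma> t \<and> \<sigma> t < b" using s5 by auto
    have st: "a < \<sigma> t" "\<sigma> t < b" using s5[OF t] by auto
    have Tst: "T (\<sigma> t) = t" using s3[of t] t by auto
    have Wpos: "W (\<sigma> t) > 0" using Wp[of "\<sigma> t"] st by auto
    have ds: "(\<sigma> has_real_derivative sqrt (2 * W (\<sigma> t))) (at t)"
      using s5[OF t] by simp
    show "((\<lambda>t. d + \<kappa> * \<sigma> t) has_real_derivative \<kappa> * sqrt (2 * W (\<sigma> t))) (at t)"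
      by (rule derivative_eq_intros ds refl)+ simp
    have dWs: "((\<lambda>t. W (\<sigma> t)) has_real_derivative (\<kappa> * (p t + (d + \<kappa> * \<sigma> t) powr (-\<alpha>))) * sqrt (2 * W (\<sigma> t))) (at t)"
      using DERIV_chain2[OF dW[OF st] ds] Tst by simp
    have hD: "((\<lambda>t. \<kappa> * sqrt (2 * W (\<sigma> t))) has_real_derivative
        \<kappa> * (inverse (sqrt (2 * W (\<sigma> t))) / 2 * (2 * ((\<kappa> * (p t + (d + \<kappa> * \<sigma> t) powr (-\<alpha>))) * sqrt (2 * W (\<sigma> t)))))) (at t)"
    proof -
      have d2: "((\<lambda>t. 2 * W (\<sigma> t)) has_real_derivative 2 * ((\<kappa> * (p t + (d + \<kappa> * \<sigma> t) powr (-\<alpha>))) * sqrt (2 * W (\<sigma> t)))) (at t)"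
        by (intro DERIV_cmult dWs)
      have "((\<lambda>t. sqrt (2 * W (\<sigma> t))) has_real_derivative
         inverse (sqrt (2 * W (\<sigma> t))) / 2 * (2 * ((\<kappa> * (p t + (d + \<kappa> * \<sigma> t) powr (-\<alpha>))) * sqrt (2 * W (\<sigma> t))))) (at t)"
        using DERIV_chain2[OF DERIV_real_sqrt d2] Wpos by simp
      then show ?thesis by (rule DERIV_cmult)
    qed
    have "\<kappa> * (inverse (sqrt (2 * W (\<sigma> t))) / 2 * (2 * ((\<kappa> * (p t + (d + \<kappa> * \<sigma> t) powr (-\<alpha>))) * sqrt (2 * W (\<sigma> t)))))
        = (\<kappa> * \<kappa>) * (p t + (d + \<kappa> * \<sigma> t) powr (-\<alpha>))"
      using Wpos by (simp add: field_simps)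
    also have "\<dots> = p t + (d + \<kappa> * \<sigma> t) powr (-\<alpha>)" using k by simp
    finally have eq: "\<kappa> * (inverse (sqrt (2 * W (\<sigma> t))) / 2 * (2 * ((\<kappa> * (p t + (d + \<kappa> * \<sigma> t) powr (-\<alpha>))) * sqrt (2 * W (\<sigma> t)))))
        = p t + (d + \<kappa> * \<sigma> t) powr (-\<alpha>)" .
    show "((\<lambda>t. \<kappa> * sqrt (2 * W (\<sigma> t))) has_real_derivative p t + (d + \<kappa> * \<sigma> t) powr (-\<alpha>)) (at t)"
      using hD unfolding eq .
  qed
qed

context setting begin

definition "k = \<alpha> * q"
lemma k_pos: "k > 0" using al0 q_pos by (simp add: k_def)

lemma phase2:
  assumes VA: "VA > 0"
  obtains u2 v2 T2 where "tA < T2" "continuous_on {tA..T2} u2" "continuous_on {tA..T2} v2"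
    "u2 tA = \<eta>" "v2 tA = VA" "T2 = tA + 2 * VA / k + 1"
    "\<And>t. tA < t \<Longrightarrow> t < T2 \<Longrightarrow> (u2 has_real_derivative v2 t) (at t)"
    "\<And>t. tA < t \<Longrightarrow> t < T2 \<Longrightarrow> (v2 has_real_derivative p t + max (u2 t) \<eta> powr (-\<alpha>)) (at t)"
proof -
  define T2 where "T2 = tA + 2 * VA / k + 1"
  have "0 < 2 * VA / k" using VA k_pos by simp
  then have T2: "tA < T2" by (simp add: T2_def)
  define L2 where "L2 = max 1 (\<alpha> * \<eta> powr (-\<alpha>-1))"
  have L2: "0 \<le> L2" by (simp add: L2_def le_max_iff_disj)
  define F1 where "F1 s x y = y" for s x y :: real
  define F2 where "F2 s x y = p s + max x \<eta> powr (-\<alpha>)" for s x y :: real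
  define g1 where "g1 s = \<eta>" for s :: real
  define g2 where "g2 s = VA" for s :: real
  have fc1: "continuous_on UNIV (\<lambda>z. F1 (fst z) (fst (snd z)) (snd (snd z)))"
    unfolding F1_def by (intro continuous_intros)
  have fc2: "continuous_on UNIV (\<lambda>z. F2 (fst z) (fst (snd z)) (snd (snd z)))"
    unfolding F2_def using eta_pos
    by (intro continuous_intros continuous_on_compose2[OF p_cont] continuous_on_powr) (auto simp: max_def)
  have lip1: "\<bar>F1 s x y - F1 s x' y'\<bar> \<le> L2 * (\<bar>x - x'\<bar> + \<bar>y - y'\<bar>)" for s x y x' y'
  proof -
    have "\<bar>y - y'\<bar> \<le> 1 * (\<bar>x - x'\<bar> + \<bar>y - y'\<bar>)" by simp
    also have "\<dots> \<le> L2 * (\<bar>x - x'\<bar> + \<bar>y - y'\<bar>)" by (rule mult_right_mono) (auto simp: L2_def)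
    finally show ?thesis by (simp add: F1_def)
  qed
  have lip2: "\<bar>F2 s x y - F2 s x' y'\<bar> \<le> L2 * (\<bar>x - x'\<bar> + \<bar>y - y'\<bar>)" for s x y x' y'
  proof -
    have "\<bar>F2 s x y - F2 s x' y'\<bar> \<le> (\<alpha> * \<eta> powr (-\<alpha>-1)) * \<bar>x - x'\<bar>"
      unfolding F2_def using lip_powr_trunc[OF al0 eta_pos, of x x'] by simp
    also have "\<dots> \<le> L2 * (\<bar>x - x'\<bar> + \<bar>y - y'\<bar>)"
      unfolding L2_def by (intro mult_mono) auto
    finally show ?thesis .
  qed
  have gc1: "continuous_on {tA..T2} g1" unfolding g1_def by (intro continuous_intros)
  have gc2: "continuous_on {tA..T2} g2" unfolding g2_def by (intro continuous_intros)
  obtain u2 v2 where uc: "continuous_on {tA..T2} u2" and vc: "continuous_on {tA..T2} v2"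
    and eqs: "\<forall>s\<in>{tA..T2}. u2 s = g1 s + integral {tA..s} (\<lambda>r. F1 r (u2 r) (v2 r)) \<and>
                  v2 s = g2 s + integral {tA..s} (\<lambda>r. F2 r (u2 r) (v2 r))"
    using picard2[OF less_imp_le[OF T2] L2 fc1 fc2 gc1 gc2 lip1 lip2] by blast
  have ic1: "continuous_on {tA..T2} (\<lambda>r. F1 r (u2 r) (v2 r))" by (rule cont_F3[OF fc1 uc vc])
  have ic2: "continuous_on {tA..T2} (\<lambda>r. F2 r (u2 r) (v2 r))" by (rule cont_F3[OF fc2 uc vc])
  show ?thesis
  proof (rule that[OF T2 uc vc _ _ T2_def])
    show "u2 tA = \<eta>" "v2 tA = VA" using eqs T2 by (auto simp: g1_def g2_def)
    fix t assume t: "tA < t" "t < T2"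
    have "(u2 has_real_derivative 0 + F1 t (u2 t) (v2 t)) (at t)"
      by (rule deriv_integral_eq[OF _ ic1 t]) (use eqs in \<open>auto simp: g1_def\<close>)
    then show "(u2 has_real_derivative v2 t) (at t)" by (simp add: F1_def)
    have "(v2 has_real_derivative 0 + F2 t (u2 t) (v2 t)) (at t)"
      by (rule deriv_integral_eq[OF _ ic2 t]) (use eqs in \<open>auto simp: g2_def\<close>)
    then show "(v2 has_real_derivative p t + max (u2 t) \<eta> powr (-\<alpha>)) (at t)" by (simp add: F2_def)
  qed
qed

end

context setting begin

lemma phase2_shape:
  assumes VA: "VA > 0" and T2: "tA < T2" "T2 = tA + 2 * VA / k + 1"
    and uc: "continuous_on {tA..T2} u2" and vc: "continuous_on {tA..T2} v2"
    and u0: "u2 tA = \<eta>" and v0': "v2 tA = VA"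
    and du: "\<And>t. tA < t \<Longrightarrow> t < T2 \<Longrightarrow> (u2 has_real_derivative v2 t) (at t)"
    and dv: "\<And>t. tA < t \<Longrightarrow> t < T2 \<Longrightarrow> (v2 has_real_derivative p t + max (u2 t) \<eta> powr (-\<alpha>)) (at t)"
  obtains tB tD \<eta>' where "tA < tB" "tB < tD" "tD \<le> T2" "\<eta> < \<eta>'" "u2 tB = \<eta>'" "v2 tB < 0"
    "\<And>t. t \<in> {tA..tD} \<Longrightarrow> u2 t \<ge> \<eta>"
proof -
  have kp: "k > 0" by (rule k_pos)
  have bnd: "p t + max (u2 t) \<eta> powr (-\<alpha>) \<le> -k" for t
  proof -
    have "max (u2 t) \<eta> powr (-\<alpha>) \<le> \<eta> powr (-\<alpha>)" using eta_pos al0 by (intro powr_mono2') auto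
    then show ?thesis using pb[of t] eta_powr by (simp add: k_def q_def algebra_simps)
  qed
  have A: "v2 s \<le> v2 r - k * (s - r)" if "tA \<le> r" "r \<le> s" "s \<le> T2" for r s
  proof -
    have "(\<lambda>t. v2 t + k * t) r \<ge> (\<lambda>t. v2 t + k * t) s"
    proof (rule DERIV_nonpos_imp_decreasing_open[of r s])
      show "r \<le> s" by fact
      show "continuous_on {r..s} (\<lambda>t. v2 t + k * t)"
        using that by (intro continuous_intros continuous_on_subset[OF vc]) auto
      fix x assume x: "r < x" "x < s"
      have "((\<lambda>t. v2 t + k * t) has_real_derivative (p x + max (u2 x) \<eta> powr (-\<alpha>)) + k * 1) (at x)"
        using x that by (intro derivative_intros dv) auto
      then show "\<exists>y. ((\<lambda>t. v2 t + k * t) has_real_derivative y) (at x) \<and> y \<le> 0"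
        using bnd[of x] by (intro exI[of _ "(p x + max (u2 x) \<eta> powr (-\<alpha>)) + k * 1"]) auto
    qed
    then show ?thesis by (simp add: algebra_simps)
  qed
  have B: "u2 s \<le> \<eta> + VA * (s - tA) - k * (s - tA)\<^sup>2 / 2" if "tA \<le> s" "s \<le> T2" for s
  proof -
    have "(\<lambda>t. u2 t - VA * (t - tA) + k * (t - tA)\<^sup>2 / 2) tA \<ge> (\<lambda>t. u2 t - VA * (t - tA) + k * (t - tA)\<^sup>2 / 2) s"
    proof (rule DERIV_nonpos_imp_decreasing_open[of tA s])
      show "tA \<le> s" by fact
      show "continuous_on {tA..s} (\<lambda>t. u2 t - VA * (t - tA) + k * (t - tA)\<^sup>2 / 2)"
        using that by (intro continuous_intros continuous_on_subset[OF uc]) auto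
      fix x assume x: "tA < x" "x < s"
      have "((\<lambda>t. u2 t - VA * (t - tA) + k * (t - tA)\<^sup>2 / 2) has_real_derivative v2 x - VA + k * (x - tA)) (at x)"
        using x that by (auto intro!: derivative_eq_intros du simp: power2_eq_square field_simps)
      moreover have "v2 x - VA + k * (x - tA) \<le> 0" using A[of tA x] x that v0' by auto
      ultimately show "\<exists>y. ((\<lambda>t. u2 t - VA * (t - tA) + k * (t - tA)\<^sup>2 / 2) has_real_derivative y) (at x) \<and> y \<le> 0"
        by blast
    qed
    then show ?thesis using u0 by simp
  qed
  have uT2: "u2 T2 < \<eta>"
  proof -
    define S where "S = 2 * VA / k + 1"
    have S: "S > 0" "T2 - tA = S" using VA kp T2 by (auto simp: S_def)
    have "k * S / 2 = VA + k / 2" using kp by (simp add: S_def field_simps)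
    then have "VA * S - k * S\<^sup>2 / 2 = S * (- k / 2)" by (simp add: power2_eq_square algebra_simps)
    also have "\<dots> < 0" using S kp by (simp add: mult_pos_neg)
    finally show ?thesis using B[of T2] T2 S by auto
  qed
  define m where "m = tA + VA / k"
  have m: "tA < m" "m < T2" using VA kp T2 by (auto simp: m_def)
  have vm: "v2 m \<le> 0" using A[of tA m] m v0' kp by (simp add: m_def)
  obtain \<xi> where xi: "tA \<le> \<xi>" "\<xi> \<le> m" "v2 \<xi> = 0"
    using IVT2'[of v2 m 0 tA] vm v0' VA m continuous_on_subset[OF vc, of "{tA..m}"] by auto
  have xi2: "tA < \<xi>" "\<xi> < T2" using xi v0' VA m by (auto simp: le_less)
  have vpos: "v2 t > 0" if "tA \<le> t" "t < \<xi>" for t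
  proof -
    have "t * k < \<xi> * k" using that kp by simp
    then show ?thesis using A[of t \<xi>] that xi xi2 by (auto simp: algebra_simps)
  qed
  have vneg: "v2 t < 0" if "\<xi> < t" "t \<le> T2" for t
  proof -
    have "\<xi> * k < t * k" using that kp by simp
    then show ?thesis using A[of \<xi> t] that xi xi2 by (auto simp: algebra_simps)
  qed
  have uinc: "u2 r \<le> u2 s" if "tA \<le> r" "r \<le> s" "s \<le> \<xi>" for r s
  proof (rule DERIV_nonneg_imp_increasing_open[of r s u2])
    show "r \<le> s" by fact
    show "continuous_on {r..s} u2" by (rule continuous_on_subset[OF uc]) (use that xi2 in auto)
    fix x assume x: "r < x" "x < s"
    have "(u2 has_real_derivative v2 x) (at x)" by (rule du) (use x that xi2 in auto)
    moreover have "0 < v2 x" by (rule vpos) (use x that in auto)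
    ultimately show "\<exists>y. (u2 has_real_derivative y) (at x) \<and> y \<ge> 0" by auto
  qed
  have udec: "u2 s \<le> u2 r" if "\<xi> \<le> r" "r \<le> s" "s \<le> T2" for r s
  proof (rule DERIV_nonpos_imp_decreasing_open[of r s u2])
    show "r \<le> s" by fact
    show "continuous_on {r..s} u2" by (rule continuous_on_subset[OF uc]) (use that xi2 in auto)
    fix x assume x: "r < x" "x < s"
    have "(u2 has_real_derivative v2 x) (at x)" by (rule du) (use x that xi2 in auto)
    moreover have "v2 x < 0" by (rule vneg) (use x that in auto)
    ultimately show "\<exists>y. (u2 has_real_derivative y) (at x) \<and> y \<le> 0" by auto
  qed
  have uxi: "u2 \<xi> > \<eta>"
  proof -
    have "u2 tA < u2 \<xi>"
    proof (rule DERIV_pos_imp_increasing_open[of tA \<xi> u2])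
      show "tA < \<xi>" by (rule xi2)
      show "continuous_on {tA..\<xi>} u2" by (rule continuous_on_subset[OF uc]) (use xi2 in auto)
      fix x assume x: "tA < x" "x < \<xi>"
      have "(u2 has_real_derivative v2 x) (at x)" by (rule du) (use x xi2 in auto)
      moreover have "0 < v2 x" by (rule vpos) (use x in auto)
      ultimately show "\<exists>y. (u2 has_real_derivative y) (at x) \<and> y > 0" by auto
    qed
    then show ?thesis using u0 by simp
  qed
  define \<eta>' where "\<eta>' = (\<eta> + u2 \<xi>) / 2"
  have e': "\<eta> < \<eta>'" "\<eta>' < u2 \<xi>" using uxi by (auto simp: \<eta>'_def)
  obtain tB where tB: "\<xi> \<le> tB" "tB \<le> T2" "u2 tB = \<eta>'"
    using IVT2'[of u2 T2 \<eta>' \<xi>] uT2 e' xi2 continuous_on_subset[OF uc, of "{\<xi>..T2}"] by auto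
  have tB2: "\<xi> < tB" "tB < T2" using tB e' uT2 by (auto simp: le_less)
  obtain tD where tD: "tB \<le> tD" "tD \<le> T2" "u2 tD = \<eta>"
    using IVT2'[of u2 T2 \<eta> tB] uT2 e' tB tB2 xi2 continuous_on_subset[OF uc, of "{tB..T2}"] by auto
  have tD2: "tB < tD" using tD tB e' by (auto simp: le_less)
  show ?thesis
  proof (rule that[OF _ tD2 tD(2) e'(1) tB(3)])
    show "tA < tB" using tB2 xi2 by simp
    show "v2 tB < 0" using vneg tB2 by auto
    fix t assume t: "t \<in> {tA..tD}"
    show "u2 t \<ge> \<eta>"
    proof (cases "t \<le> \<xi>")
      case True then show ?thesis using uinc[of tA t] u0 t by auto
    next
      case False then show ?thesis using udec[of t tD] tD t by auto
    qed
  qed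
qed

end

context setting begin

lemma G_anti: assumes "\<eta> \<le> a" "a \<le> b" shows "G b \<le> G a"
proof (rule DERIV_nonpos_imp_decreasing_open[of a b G])
  show "a \<le> b" by fact
  show "continuous_on {a..b} G" unfolding G_def using assms eta_pos al1
    by (intro continuous_intros continuous_on_powr) auto
  fix x assume x: "a < x" "x < b"
  then have xp: "x > 0" using assms eta_pos by auto
  have "(G has_real_derivative (1 - \<alpha>) * x powr (1 - \<alpha> - 1) / (1 - \<alpha>) - q * 1) (at x)"
    unfolding G_def using xp by (intro DERIV_diff DERIV_cdivide has_real_derivative_powr DERIV_cmult DERIV_ident) auto
  moreover have "(1 - \<alpha>) * x powr (1 - \<alpha> - 1) / (1 - \<alpha>) - q * 1 = x powr (-\<alpha>) - q" using al1 by simp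
  moreover have "x powr (-\<alpha>) \<le> \<eta> powr (-\<alpha>)" using x assms eta_pos al0 by (intro powr_mono2') auto
  moreover have "\<eta> powr (-\<alpha>) - q \<le> 0"
  proof -
    have "\<alpha> * q > 0" using al0 q_pos by simp
    moreover have "\<eta> powr (-\<alpha>) = q - \<alpha> * q" using eta_powr by (simp add: algebra_simps)
    ultimately show ?thesis by linarith
  qed
  ultimately show "\<exists>y. (G has_real_derivative y) (at x) \<and> y \<le> 0" by (intro exI[of _ "x powr (-\<alpha>) - q"]) auto
qed

lemma G_ge: assumes "\<eta> \<le> e" "0 \<le> x" "x \<le> e" shows "G e \<le> G x"
proof (cases "x \<le> \<eta>")
  case True
  have "G x \<ge> 0" using G_nonneg[of x] True assms by (simp add: G_def)
  moreover have "G e \<le> G \<eta>" using G_anti[of \<eta> e] assms by auto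
  ultimately show ?thesis using G_eta by simp
next
  case False
  then show ?thesis using G_anti[of x e] assms by auto
qed

lemma phase3:
  assumes WB: "WB > 0" and e': "\<eta> \<le> \<eta>'"
  obtains T3 Q3 where "continuous_on {0..\<eta>'} T3" "continuous_on {0..\<eta>'} Q3" "T3 0 = tB" "Q3 0 = WB"
   "\<And>x. x \<in> {0..\<eta>'} \<Longrightarrow> Q3 x \<ge> WB"
   "\<And>x. 0 < x \<Longrightarrow> x < \<eta>' \<Longrightarrow> (T3 has_real_derivative 1 / sqrt (2 * Q3 x)) (at x)"
   "\<And>x. 0 < x \<Longrightarrow> x < \<eta>' \<Longrightarrow> (Q3 has_real_derivative (-1) * (p (T3 x) + (\<eta>' + (-1) * x) powr (-\<alpha>))) (at x)"
proof -
  define c3 where "c3 = WB / 2"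
  have c3: "c3 > 0" using WB by (simp add: c3_def)
  have X: "0 \<le> \<eta>'" using e' eta_pos by simp
  define L3 where "L3 = max Lp (1 / (2 * c3 * sqrt (2 * c3)))"
  have L3: "0 \<le> L3" using Lp by (auto simp: L3_def le_max_iff_disj)
  define F1 where "F1 s x y = 1 / sqrt (2 * max y c3)" for s x y :: real
  define F2 where "F2 s x y = - p x" for s x y :: real
  define g1 where "g1 s = tB" for s :: real
  define g2 where "g2 s = WB - (\<eta>' powr (1 - \<alpha>) - (\<eta>' - s) powr (1 - \<alpha>)) / (1 - \<alpha>)" for s :: real
  have fc1: "continuous_on UNIV (\<lambda>z. F1 (fst z) (fst (snd z)) (snd (snd z)))"
    unfolding F1_def using c3 by (intro continuous_intros) (auto simp: max_def)
  have fc2: "continuous_on UNIV (\<lambda>z. F2 (fst z) (fst (snd z)) (snd (snd z)))"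
    unfolding F2_def by (intro continuous_on_compose2[OF p_cont] continuous_intros) auto
  have gc1: "continuous_on {0..\<eta>'} g1" unfolding g1_def by (intro continuous_intros)
  have gc2: "continuous_on {0..\<eta>'} g2" unfolding g2_def using al1
    by (intro continuous_intros continuous_on_powr') auto
  have lip1: "\<bar>F1 s x y - F1 s x' y'\<bar> \<le> L3 * (\<bar>x - x'\<bar> + \<bar>y - y'\<bar>)" for s x y x' y'
  proof -
    have "\<bar>F1 s x y - F1 s x' y'\<bar> \<le> (1 / (2 * c3 * sqrt (2 * c3))) * \<bar>y - y'\<bar>"
      unfolding F1_def by (rule lip_isqrt_trunc[OF c3])
    also have "\<dots> \<le> L3 * (\<bar>x - x'\<bar> + \<bar>y - y'\<bar>)"
      using Lp unfolding L3_def by (intro mult_mono) (auto simp: le_max_iff_disj)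
    finally show ?thesis .
  qed
  have lip2: "\<bar>F2 s x y - F2 s x' y'\<bar> \<le> L3 * (\<bar>x - x'\<bar> + \<bar>y - y'\<bar>)" for s x y x' y'
  proof -
    have "\<bar>F2 s x y - F2 s x' y'\<bar> \<le> Lp * \<bar>x - x'\<bar>" unfolding F2_def using p_lip[of x x'] by simp
    also have "\<dots> \<le> L3 * (\<bar>x - x'\<bar> + \<bar>y - y'\<bar>)"
      using Lp unfolding L3_def by (intro mult_mono) (auto simp: le_max_iff_disj)
    finally show ?thesis .
  qed
  obtain T3 Q3 where tc: "continuous_on {0..\<eta>'} T3" and Qc: "continuous_on {0..\<eta>'} Q3"
    and eqs: "\<forall>s\<in>{0..\<eta>'}. T3 s = g1 s + integral {0..s} (\<lambda>r. F1 r (T3 r) (Q3 r)) \<and>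
                  Q3 s = g2 s + integral {0..s} (\<lambda>r. F2 r (T3 r) (Q3 r))"
    using picard2[OF X L3 fc1 fc2 gc1 gc2 lip1 lip2] by blast
  have ic1: "continuous_on {0..\<eta>'} (\<lambda>r. F1 r (T3 r) (Q3 r))" by (rule cont_F3[OF fc1 tc Qc])
  have ic2: "continuous_on {0..\<eta>'} (\<lambda>r. F2 r (T3 r) (Q3 r))" by (rule cont_F3[OF fc2 tc Qc])
  have t0: "T3 0 = tB" using eqs X by (auto simp: g1_def)
  have Q0: "Q3 0 = WB" using eqs X by (auto simp: g2_def)
  have lb: "Q3 x \<ge> WB" if x: "x \<in> {0..\<eta>'}" for x
  proof -
    have "(-p1) * (x - 0) \<le> integral {0..x} (\<lambda>r. F2 r (T3 r) (Q3 r))"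
      using integral_bounds[OF continuous_on_subset[OF ic2], of 0 x "-p1" "-p2"] x pb
      by (auto simp: F2_def)
    then have "Q3 x \<ge> g2 x + q * x" using eqs x by (auto simp: q_def)
    moreover have "G \<eta>' \<le> G (\<eta>' - x)" using G_ge[OF e', of "\<eta>' - x"] x by auto
    ultimately show ?thesis by (simp add: g2_def G_def algebra_simps diff_divide_distrib)
  qed
  show ?thesis
  proof (rule that[OF tc Qc t0 Q0 lb])
    fix x assume x: "0 < x" "x < \<eta>'"
    have m: "max (Q3 x) c3 = Q3 x" using lb[of x] x WB by (auto simp: c3_def)
    have "(T3 has_real_derivative 0 + F1 x (T3 x) (Q3 x)) (at x)"
      by (rule deriv_integral_eq[OF _ ic1 x]) (use eqs in \<open>auto simp: g1_def\<close>)
    then show "(T3 has_real_derivative 1 / sqrt (2 * Q3 x)) (at x)" by (simp add: F1_def m)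
    have dg2: "(g2 has_real_derivative - ((\<eta>' - x) powr (-\<alpha>))) (at x)"
    proof -
      have "(g2 has_real_derivative 0 - (0 - (1 - \<alpha>) * (\<eta>' - x) powr (1 - \<alpha> - 1) * (0 - 1)) / (1 - \<alpha>)) (at x)"
        unfolding g2_def using x
        by (intro DERIV_diff DERIV_cdivide DERIV_const DERIV_chain2[OF has_real_derivative_powr] DERIV_ident) auto
      moreover have "0 - (0 - (1 - \<alpha>) * (\<eta>' - x) powr (1 - \<alpha> - 1) * (0 - 1)) / (1 - \<alpha>) = - ((\<eta>' - x) powr (-\<alpha>))"
        using al1 by simp
      ultimately show ?thesis by simp
    qed
    have "(Q3 has_real_derivative - ((\<eta>' - x) powr (-\<alpha>)) + F2 x (T3 x) (Q3 x)) (at x)"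
      by (rule deriv_integral_eq[OF _ ic2 x dg2]) (use eqs in auto)
    then show "(Q3 has_real_derivative (-1) * (p (T3 x) + (\<eta>' + (-1) * x) powr (-\<alpha>))) (at x)"
      by (simp add: F2_def algebra_simps)
  qed
qed

end

context setting begin

lemma existence:
  obtains t1 U V \<tau>1 W1 xE where "t0 < t1"
    "\<And>t. t0 < t \<Longrightarrow> t < t1 \<Longrightarrow> U t > 0 \<and> (U has_real_derivative V t) (at t) \<and>
          (V has_real_derivative p t + U t powr (-\<alpha>)) (at t)"
    "(U \<longlongrightarrow> 0) (at_right t0)" "(U \<longlongrightarrow> 0) (at_left t1)" "(V \<longlongrightarrow> v0) (at_right t0)"
    "\<exists>v1<0. (V \<longlongrightarrow> v1) (at_left t1)"
    "continuous_on {0..X1} \<tau>1" "continuous_on {0..X1} W1" "\<tau>1 0 = t0" "W1 0 = v0\<^sup>2 / 2"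
    "\<And>x. x \<in> {0..X1} \<Longrightarrow> W1 x \<ge> c1"
    "\<And>x. 0 < x \<Longrightarrow> x < X1 \<Longrightarrow> (\<tau>1 has_real_derivative 1 / sqrt (2 * W1 x)) (at x)"
    "\<And>x. 0 < x \<Longrightarrow> x < X1 \<Longrightarrow> (W1 has_real_derivative p (\<tau>1 x) + x powr (-\<alpha>)) (at x)"
    "0 < xE" "xE < X1"
    "\<And>x. 0 < x \<Longrightarrow> x \<le> xE \<Longrightarrow> t0 < \<tau>1 x \<and> \<tau>1 x < t1 \<and> U (\<tau>1 x) = x \<and> V (\<tau>1 x) = sqrt (2 * W1 x)"
proof -
  obtain \<tau>1 W1 where P1c: "continuous_on {0..X1} \<tau>1" and P1W: "continuous_on {0..X1} W1"
    and P10: "\<tau>1 0 = t0" and P1W0: "W1 0 = v0\<^sup>2 / 2"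
    and P1c1: "\<And>x. x \<in> {0..X1} \<Longrightarrow> W1 x \<ge> c1"
    and P1c2: "\<And>x. x \<in> {0..\<eta>} \<Longrightarrow> W1 x \<ge> c"
    and P1dt: "\<And>x. 0 < x \<Longrightarrow> x < X1 \<Longrightarrow> (\<tau>1 has_real_derivative 1 / sqrt (2 * W1 x)) (at x)"
    and P1dW: "\<And>x. 0 < x \<Longrightarrow> x < X1 \<Longrightarrow> (W1 has_real_derivative p (\<tau>1 x) + x powr (-\<alpha>)) (at x)"
    by (rule phase1) (rule that)
  have X1p: "0 < X1" using X1_gt eta_pos by simp
  have W1p: "W1 x > 0" if "x \<in> {0..X1}" for x using P1c1[OF that] c1_pos by simp
  obtain \<sigma>1 where S1a: "\<tau>1 0 < \<tau>1 X1" and S1c: "continuous_on {\<tau>1 0..\<tau>1 X1} \<sigma>1"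
    and S1m: "\<And>t. t \<in> {\<tau>1 0..\<tau>1 X1} \<Longrightarrow> \<sigma>1 t \<in> {0..X1} \<and> \<tau>1 (\<sigma>1 t) = t"
    and S1i: "\<And>x. x \<in> {0..X1} \<Longrightarrow> \<sigma>1 (\<tau>1 x) = x"
    and S1o: "\<And>t. \<tau>1 0 < t \<Longrightarrow> t < \<tau>1 X1 \<Longrightarrow> 0 < \<sigma>1 t \<and> \<sigma>1 t < X1"
    and S1du: "\<And>t. \<tau>1 0 < t \<Longrightarrow> t < \<tau>1 X1 \<Longrightarrow> ((\<lambda>t. 0 + 1 * \<sigma>1 t) has_real_derivative 1 * sqrt (2 * W1 (\<sigma>1 t))) (at t)"
    and S1dv: "\<And>t. \<tau>1 0 < t \<Longrightarrow> t < \<tau>1 X1 \<Longrightarrow> ((\<lambda>t. 1 * sqrt (2 * W1 (\<sigma>1 t))) has_real_derivative p t + (0 + 1 * \<sigma>1 t) powr (-\<alpha>)) (at t)"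
    and S1mono: "\<And>x y. 0 \<le> x \<Longrightarrow> x < y \<Longrightarrow> y \<le> X1 \<Longrightarrow> \<tau>1 x < \<tau>1 y"
    by (rule inv_solution[where a=0 and b=X1 and T=\<tau>1 and W=W1 and p=p and \<kappa>=1 and d=0 and \<alpha>=\<alpha>, OF X1p P1c P1W W1p P1dt]) (use P1dW in auto)
  define T1 where "T1 = \<tau>1 X1"
  define tA where "tA = \<tau>1 \<eta>"
  define u1 where "u1 = \<sigma>1"
  define v1 where "v1 = (\<lambda>t. sqrt (2 * W1 (\<sigma>1 t)))"
  have T1: "t0 < T1" using S1a P10 by (simp add: T1_def)
  have tA: "t0 < tA" "tA < T1" using S1mono[of 0 \<eta>] S1mono[of \<eta> X1] eta_pos X1_gt P10
    by (auto simp: tA_def T1_def)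
  have u1c: "continuous_on {t0..T1} u1" using S1c P10 by (simp add: u1_def T1_def)
  have v1c: "continuous_on {t0..T1} v1"
  proof -
    have "continuous_on {t0..T1} (\<lambda>t. W1 (\<sigma>1 t))"
      by (rule continuous_on_compose2[OF P1W u1c[unfolded u1_def]]) (use S1m P10 in \<open>auto simp: T1_def\<close>)
    then show ?thesis unfolding v1_def by (intro continuous_intros)
  qed
  have du1: "(u1 has_real_derivative v1 t) (at t)" if "t0 < t" "t < T1" for t
    using S1du[of t] that P10 by (simp add: u1_def v1_def T1_def)
  have dv1: "(v1 has_real_derivative p t + u1 t powr (-\<alpha>)) (at t)" if "t0 < t" "t < T1" for t
    using S1dv[of t] that P10 by (simp add: u1_def v1_def T1_def)
  have u1pos: "u1 t > 0" if "t0 < t" "t \<le> T1" for t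
  proof -
    have "u1 t \<in> {0..X1}" "\<tau>1 (u1 t) = t" using S1m[of t] that P10 by (auto simp: u1_def T1_def)
    then show ?thesis using that P10 by (cases "u1 t = 0") auto
  qed
  have u1A: "u1 tA = \<eta>" using S1i[of \<eta>] eta_pos X1_gt by (simp add: u1_def tA_def)
  define VA where "VA = sqrt (2 * W1 \<eta>)"
  have VA: "VA > 0" using W1p[of \<eta>] eta_pos X1_gt by (simp add: VA_def)
  have v1A: "v1 tA = VA" using u1A by (simp add: v1_def VA_def u1_def)
  obtain u2 v2 T2 where P2T: "tA < T2" and P2u: "continuous_on {tA..T2} u2" and P2v: "continuous_on {tA..T2} v2"
    and P2u0: "u2 tA = \<eta>" and P2v0: "v2 tA = VA" and P2T2: "T2 = tA + 2 * VA / k + 1"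
    and P2du: "\<And>t. tA < t \<Longrightarrow> t < T2 \<Longrightarrow> (u2 has_real_derivative v2 t) (at t)"
    and P2dv: "\<And>t. tA < t \<Longrightarrow> t < T2 \<Longrightarrow> (v2 has_real_derivative p t + max (u2 t) \<eta> powr (-\<alpha>)) (at t)"
    by (rule phase2[OF VA, where tA=tA]) (rule that)
  obtain tB tD \<eta>' where tB: "tA < tB" "tB < tD" "tD \<le> T2" and e': "\<eta> < \<eta>'" and u2B: "u2 tB = \<eta>'"
    and v2B: "v2 tB < 0" and u2ge: "\<And>t. t \<in> {tA..tD} \<Longrightarrow> u2 t \<ge> \<eta>"
    by (rule phase2_shape[OF VA P2T P2T2 P2u P2v P2u0 P2v0 P2du P2dv], (assumption+)?) (rule that)
  have dv2: "(v2 has_real_derivative p t + u2 t powr (-\<alpha>)) (at t)" if "tA < t" "t < tD" for t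
  proof -
    have "max (u2 t) \<eta> = u2 t" using u2ge[of t] that by auto
    then show ?thesis using P2dv[of t] that tB by auto
  qed
  have du2: "(u2 has_real_derivative v2 t) (at t)" if "tA < t" "t < tD" for t
    using P2du[of t] that tB by auto
  define WB where "WB = (v2 tB)\<^sup>2 / 2"
  have WB: "WB > 0" using v2B by (simp add: WB_def)
  obtain T3 Q3 where P3c: "continuous_on {0..\<eta>'} T3" and P3Q: "continuous_on {0..\<eta>'} Q3"
    and P30: "T3 0 = tB" and P3Q0: "Q3 0 = WB" and P3lb: "\<And>x. x \<in> {0..\<eta>'} \<Longrightarrow> Q3 x \<ge> WB"
    and P3dt: "\<And>x. 0 < x \<Longrightarrow> x < \<eta>' \<Longrightarrow> (T3 has_real_derivative 1 / sqrt (2 * Q3 x)) (at x)"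
    and P3dQ: "\<And>x. 0 < x \<Longrightarrow> x < \<eta>' \<Longrightarrow> (Q3 has_real_derivative (-1) * (p (T3 x) + (\<eta>' + (-1) * x) powr (-\<alpha>))) (at x)"
    by (rule phase3[OF WB less_imp_le[OF e'], where tB=tB]) (rule that)
  have e'p: "0 < \<eta>'" using e' eta_pos by simp
  have Q3p: "Q3 x > 0" if "x \<in> {0..\<eta>'}" for x using P3lb[OF that] WB by simp
  obtain \<sigma>3 where S3a: "T3 0 < T3 \<eta>'" and S3c: "continuous_on {T3 0..T3 \<eta>'} \<sigma>3"
    and S3m: "\<And>t. t \<in> {T3 0..T3 \<eta>'} \<Longrightarrow> \<sigma>3 t \<in> {0..\<eta>'} \<and> T3 (\<sigma>3 t) = t"
    and S3i: "\<And>x. x \<in> {0..\<eta>'} \<Longrightarrow> \<sigma>3 (T3 x) = x"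
    and S3o: "\<And>t. T3 0 < t \<Longrightarrow> t < T3 \<eta>' \<Longrightarrow> 0 < \<sigma>3 t \<and> \<sigma>3 t < \<eta>'"
    and S3du: "\<And>t. T3 0 < t \<Longrightarrow> t < T3 \<eta>' \<Longrightarrow> ((\<lambda>t. \<eta>' + (-1) * \<sigma>3 t) has_real_derivative (-1) * sqrt (2 * Q3 (\<sigma>3 t))) (at t)"
    and S3dv: "\<And>t. T3 0 < t \<Longrightarrow> t < T3 \<eta>' \<Longrightarrow> ((\<lambda>t. (-1) * sqrt (2 * Q3 (\<sigma>3 t))) has_real_derivative p t + (\<eta>' + (-1) * \<sigma>3 t) powr (-\<alpha>)) (at t)"
    and S3mono: "\<And>x y. 0 \<le> x \<Longrightarrow> x < y \<Longrightarrow> y \<le> \<eta>' \<Longrightarrow> T3 x < T3 y"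
    by (rule inv_solution[where a=0 and b=\<eta>' and T=T3 and W=Q3 and p=p and \<kappa>="-1" and d=\<eta>' and \<alpha>=\<alpha>, OF e'p P3c P3Q Q3p P3dt P3dQ]) auto
  define t1 where "t1 = T3 \<eta>'"
  define u3 where "u3 = (\<lambda>t. \<eta>' + (-1) * \<sigma>3 t)"
  define v3 where "v3 = (\<lambda>t. (-1) * sqrt (2 * Q3 (\<sigma>3 t)))"
  have t1: "tB < t1" using S3a P30 by (simp add: t1_def)
  have u3c: "continuous_on {tB..t1} u3" unfolding u3_def using S3c P30 by (auto simp: t1_def intro!: continuous_intros)
  have v3c: "continuous_on {tB..t1} v3"
  proof -
    have "continuous_on {tB..t1} (\<lambda>t. Q3 (\<sigma>3 t))"
      by (rule continuous_on_compose2[OF P3Q]) (use S3c S3m P30 in \<open>auto simp: t1_def\<close>)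
    then show ?thesis unfolding v3_def by (intro continuous_intros)
  qed
  have du3: "(u3 has_real_derivative v3 t) (at t)" if "tB < t" "t < t1" for t
    using S3du[of t] that P30 unfolding u3_def v3_def t1_def by simp
  have dv3: "(v3 has_real_derivative p t + u3 t powr (-\<alpha>)) (at t)" if "tB < t" "t < t1" for t
    using S3dv[of t] that P30 unfolding u3_def v3_def t1_def by simp
  have u3pos: "u3 t > 0" if "tB \<le> t" "t < t1" for t
  proof -
    have "\<sigma>3 t \<in> {0..\<eta>'}" "T3 (\<sigma>3 t) = t" using S3m[of t] that P30 by (auto simp: t1_def)
    then show ?thesis using that by (cases "\<sigma>3 t = \<eta>'") (auto simp: u3_def t1_def)
  qed
  have u3B: "u3 tB = \<eta>'" using S3i[of 0] e'p P30 by (simp add: u3_def)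
  have v3B: "v3 tB = v2 tB"
  proof -
    have "\<sigma>3 tB = 0" using S3i[of 0] e'p P30 by simp
    moreover have "2 * Q3 0 = (v2 tB)\<^sup>2" using P3Q0 by (simp add: WB_def)
    ultimately have "v3 tB = - sqrt ((v2 tB)\<^sup>2)" by (simp add: v3_def)
    then show ?thesis using v2B by simp
  qed
  have u3t1: "u3 t1 = 0" using S3i[of \<eta>'] e'p by (simp add: u3_def t1_def)
  have v3t1: "v3 t1 < 0" using S3i[of \<eta>'] e'p Q3p[of \<eta>'] by (simp add: v3_def t1_def)

  define tE1 where "tE1 = min T1 tB"
  have tE1: "tA < tE1" "tE1 \<le> T1" "tE1 \<le> tB" using tA tB by (auto simp: tE1_def)
  have agree12: "\<forall>s\<in>{tA..tE1}. u1 s = u2 s \<and> v1 s = v2 s"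
  proof (rule uniq_true[where p=p and \<alpha>=\<alpha>])
    show "tA \<le> tE1" using tE1 by simp
    show "0 < \<alpha>" by (rule al0)
    show "continuous_on {tA..tE1} u1" "continuous_on {tA..tE1} v1"
      using u1c v1c tA tE1 by (auto elim!: continuous_on_subset)
    show "continuous_on {tA..tE1} u2" "continuous_on {tA..tE1} v2"
      using P2u P2v tA tE1 tB by (auto elim!: continuous_on_subset)
    fix s
    show "s \<in> {tA..tE1} \<Longrightarrow> u1 s > 0" using u1pos[of s] tA tE1 by auto
    show "s \<in> {tA..tE1} \<Longrightarrow> u2 s > 0" using u2ge[of s] eta_pos tE1 tB by force
    assume s: "tA < s" "s < tE1"
    show "(u1 has_real_derivative v1 s) (at s)" using du1[of s] s tA tE1 by auto
    show "(v1 has_real_derivative p s + u1 s powr (-\<alpha>)) (at s)" using dv1[of s] s tA tE1 by auto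
    show "(u2 has_real_derivative v2 s) (at s)" using du2[of s] s tE1 tB by auto
    show "(v2 has_real_derivative p s + u2 s powr (-\<alpha>)) (at s)" using dv2[of s] s tE1 tB by auto
  qed (use u1A P2u0 v1A P2v0 in auto)
  define tE where "tE = min tD t1"
  have tE: "tB < tE" "tE \<le> tD" "tE \<le> t1" using tB t1 by (auto simp: tE_def)
  define tC where "tC = (tB + tE) / 2"
  define tF where "tF = (tC + tE) / 2"
  have tCF: "tB < tC" "tC < tF" "tF < tE" using tE by (auto simp: tC_def tF_def)
  have agree23: "\<forall>s\<in>{tB..tF}. u2 s = u3 s \<and> v2 s = v3 s"
  proof (rule uniq_true[where p=p and \<alpha>=\<alpha>])
    show "tB \<le> tF" using tCF by simp
    show "0 < \<alpha>" by (rule al0)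
    show "continuous_on {tB..tF} u3" "continuous_on {tB..tF} v3"
      using u3c v3c tCF tE by (auto elim!: continuous_on_subset)
    show "continuous_on {tB..tF} u2" "continuous_on {tB..tF} v2"
      using P2u P2v tCF tE tB by (auto elim!: continuous_on_subset)
    fix s
    show "s \<in> {tB..tF} \<Longrightarrow> u3 s > 0" using u3pos[of s] tCF tE by auto
    show "s \<in> {tB..tF} \<Longrightarrow> u2 s > 0" using u2ge[of s] eta_pos tCF tE tB by force
    assume s: "tB < s" "s < tF"
    show "(u3 has_real_derivative v3 s) (at s)" using du3[of s] s tCF tE by auto
    show "(v3 has_real_derivative p s + u3 s powr (-\<alpha>)) (at s)" using dv3[of s] s tCF tE by auto
    show "(u2 has_real_derivative v2 s) (at s)" using du2[of s] s tCF tE tB by auto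
    show "(v2 has_real_derivative p s + u2 s powr (-\<alpha>)) (at s)" using dv2[of s] s tCF tE tB by auto
  qed (use u3B u2B v3B in auto)
  define U where "U t = (if t \<le> tA then u1 t else if t \<le> tC then u2 t else u3 t)" for t
  define V where "V t = (if t \<le> tA then v1 t else if t \<le> tC then v2 t else v3 t)" for t
  define tG where "tG = min tE1 tC"
  have tG: "tA < tG" "tG \<le> tE1" "tG \<le> tC" using tE1 tCF tB by (auto simp: tG_def)
  have Ua: "U s = u1 s \<and> V s = v1 s" if "s < tG" for s
  proof (cases "s \<le> tA")
    case True then show ?thesis by (simp add: U_def V_def)
  next
    case False then show ?thesis using agree12 that tG by (auto simp: U_def V_def)
  qed
  have Ub: "U s = u2 s \<and> V s = v2 s" if "tA < s" "s \<le> tC" for s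
    using that by (simp add: U_def V_def)
  have Uc: "U s = u2 s \<and> V s = v2 s" if "tB < s" "s < tF" for s
  proof (cases "s \<le> tC")
    case True then show ?thesis using Ub that tB by auto
  next
    case False then show ?thesis using agree23 that tB tCF by (auto simp: U_def V_def)
  qed
  have Ud: "U s = u3 s \<and> V s = v3 s" if "tC < s" for s
    using that tCF tB by (simp add: U_def V_def)
  have sol: "U t > 0 \<and> (U has_real_derivative V t) (at t) \<and> (V has_real_derivative p t + U t powr (-\<alpha>)) (at t)"
    if t: "t0 < t" "t < t1" for t
  proof -
    have trans: "(U has_real_derivative V t) (at t) \<and> (V has_real_derivative p t + U t powr (-\<alpha>)) (at t)"
      if S: "open S" "t \<in> S" and eq: "\<And>s. s \<in> S \<Longrightarrow> U s = u s \<and> V s = v s"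
        and d1: "(u has_real_derivative v t) (at t)" and d2: "(v has_real_derivative p t + u t powr (-\<alpha>)) (at t)"
      for S u v
    proof
      show "(U has_real_derivative V t) (at t)"
        using has_field_derivative_transform_within_open[OF d1 S, of U] eq S by auto
      show "(V has_real_derivative p t + U t powr (-\<alpha>)) (at t)"
        using has_field_derivative_transform_within_open[OF d2 S, of V] eq S by auto
    qed
    consider "t < tG" | "tG \<le> t" "t < tC" | "tC \<le> t" "t < tF" | "tF \<le> t" by linarith
    then show ?thesis
    proof cases
      case 1
      have "U t > 0" using Ua[of t] u1pos[of t] 1 t tG tE1 by auto
      moreover have "(U has_real_derivative V t) (at t) \<and> (V has_real_derivative p t + U t powr (-\<alpha>)) (at t)"
        by (rule trans[of "{t0<..<tG}" u1 v1]) (use Ua 1 t tG tE1 du1 dv1 in auto)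
      ultimately show ?thesis by blast
    next
      case 2
      have "U t > 0" using Ub[of t] u2ge[of t] 2 tG tCF tE eta_pos by force
      moreover have "(U has_real_derivative V t) (at t) \<and> (V has_real_derivative p t + U t powr (-\<alpha>)) (at t)"
        by (rule trans[of "{tA<..<tC}" u2 v2]) (use Ub 2 tG tCF tE du2 dv2 in auto)
      ultimately show ?thesis by blast
    next
      case 3
      have "U t > 0" using Uc[of t] u2ge[of t] 3 tG tCF tE tB eta_pos by force
      moreover have "(U has_real_derivative V t) (at t) \<and> (V has_real_derivative p t + U t powr (-\<alpha>)) (at t)"
        by (rule trans[of "{tB<..<tF}" u2 v2]) (use Uc 3 tB tCF tE du2 dv2 in auto)
      ultimately show ?thesis by blast
    next
      case 4
      have "U t > 0" using Ud[of t] u3pos[of t] 4 tCF t tB by auto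
      moreover have "(U has_real_derivative V t) (at t) \<and> (V has_real_derivative p t + U t powr (-\<alpha>)) (at t)"
        by (rule trans[of "{tC<..<t1}" u3 v3]) (use Ud 4 t tB tCF du3 dv3 in auto)
      ultimately show ?thesis by blast
    qed
  qed
  have t01: "t0 < t1" using tA tB t1 by simp
  have evR: "eventually (\<lambda>s. u1 s = U s \<and> v1 s = V s) (at_right t0)"
    unfolding eventually_at_right_field using tG tA Ua by (intro exI[of _ tG]) auto
  have evL: "eventually (\<lambda>s. u3 s = U s \<and> v3 s = V s) (at_left t1)"
    unfolding eventually_at_left_field using tCF tE Ud by (intro exI[of _ tC]) auto
  have u1t0: "u1 t0 = 0" using S1i[of 0] X1p P10 by (simp add: u1_def)
  have v1t0: "v1 t0 = v0"
  proof -
    have "v1 t0 = sqrt (2 * W1 0)" using S1i[of 0] X1p P10 by (simp add: v1_def)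
    also have "2 * W1 0 = v0\<^sup>2" using P1W0 by simp
    finally show ?thesis using v0_pos by simp
  qed
  have lim1: "(U \<longlongrightarrow> 0) (at_right t0)"
    using Lim_transform_eventually[OF continuous_on_Icc_at_rightD[OF u1c T1] eventually_mono[OF evR]] u1t0 by auto
  have lim2: "(V \<longlongrightarrow> v0) (at_right t0)"
    using Lim_transform_eventually[OF continuous_on_Icc_at_rightD[OF v1c T1] eventually_mono[OF evR]] v1t0 by auto
  have lim3: "(U \<longlongrightarrow> 0) (at_left t1)"
    using Lim_transform_eventually[OF continuous_on_Icc_at_leftD[OF u3c t1] eventually_mono[OF evL]] u3t1 by auto
  have lim4: "(V \<longlongrightarrow> v3 t1) (at_left t1)"
    using Lim_transform_eventually[OF continuous_on_Icc_at_leftD[OF v3c t1] eventually_mono[OF evL]] by auto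
  define tH where "tH = (t0 + tG) / 2"
  have tH: "t0 < tH" "tH < tG" using tG tA by (auto simp: tH_def)
  define xE where "xE = \<sigma>1 tH"
  have xE: "0 < xE" "xE < X1" "\<tau>1 xE = tH"
    using S1o[of tH] S1m[of tH] tH tG tE1 P10 by (auto simp: xE_def T1_def)
  show ?thesis
  proof (rule that[OF t01 sol lim1 lim3 lim2 _ P1c P1W P10 P1W0 P1c1 P1dt P1dW xE(1,2)])
    show "\<exists>v1<0. (V \<longlongrightarrow> v1) (at_left t1)" using lim4 v3t1 by blast
    fix x assume x: "0 < x" "x \<le> xE"
    have tx: "t0 < \<tau>1 x" "\<tau>1 x \<le> tH"
      using S1mono[of 0 x] S1mono[of x xE] x xE P10 by (auto simp: le_less)
    have "U (\<tau>1 x) = u1 (\<tau>1 x) \<and> V (\<tau>1 x) = v1 (\<tau>1 x)" using Ua tx tH by auto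
    moreover have "\<sigma>1 (\<tau>1 x) = x" using S1i[of x] x xE by auto
    ultimately show "t0 < \<tau>1 x \<and> \<tau>1 x < t1 \<and> U (\<tau>1 x) = x \<and> V (\<tau>1 x) = sqrt (2 * W1 x)"
      using tx tH tG tE1 tCF tE tB t1 by (auto simp: u1_def v1_def)
  qed
qed

end

context setting begin

lemma uniqueness:
  assumes t01: "t0 < t1"
    and sol: "\<And>t. t0 < t \<Longrightarrow> t < t1 \<Longrightarrow> U t > 0 \<and> (U has_real_derivative V t) (at t) \<and>
          (V has_real_derivative p t + U t powr (-\<alpha>)) (at t)"
    and limL: "(U \<longlongrightarrow> 0) (at_left t1)"
    and P1c: "continuous_on {0..X1} \<tau>1" and P1W: "continuous_on {0..X1} W1" and P10: "\<tau>1 0 = t0"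
    and P1W0: "W1 0 = v0\<^sup>2 / 2"
    and P1c1: "\<And>x. x \<in> {0..X1} \<Longrightarrow> W1 x \<ge> c1"
    and P1dt: "\<And>x. 0 < x \<Longrightarrow> x < X1 \<Longrightarrow> (\<tau>1 has_real_derivative 1 / sqrt (2 * W1 x)) (at x)"
    and P1dW: "\<And>x. 0 < x \<Longrightarrow> x < X1 \<Longrightarrow> (W1 has_real_derivative p (\<tau>1 x) + x powr (-\<alpha>)) (at x)"
    and xE: "0 < xE" "xE < X1"
    and xEp: "\<And>x. 0 < x \<Longrightarrow> x \<le> xE \<Longrightarrow> t0 < \<tau>1 x \<and> \<tau>1 x < t1 \<and> U (\<tau>1 x) = x \<and> V (\<tau>1 x) = sqrt (2 * W1 x)"
    and t2: "t0 < t2"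
    and wsol: "\<And>t. t0 < t \<Longrightarrow> t < t2 \<Longrightarrow> w t > 0 \<and> (w has_real_derivative w' t) (at t) \<and>
          (w' has_real_derivative p t + w t powr (-\<alpha>)) (at t)"
    and wl: "(w \<longlongrightarrow> 0) (at_right t0)" and wl': "(w' \<longlongrightarrow> v0) (at_right t0)"
  shows "t2 \<le> t1 \<and> (\<forall>t\<in>{t0<..<t2}. w t = U t)"
proof -
  have "eventually (\<lambda>t. w' t > v0 / 2) (at_right t0)"
    using order_tendstoD(1)[OF wl', of "v0/2"] v0_pos by simp
  then obtain b where b: "b > t0" "\<And>y. t0 < y \<Longrightarrow> y < b \<Longrightarrow> w' y > v0 / 2"
    unfolding eventually_at_right_field by blast
  define e where "e = (t0 + min b t2) / 2"
  have e: "t0 < e" "e < b" "e < t2" using b t2 by (auto simp: e_def)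
  define wt where "wt t = (if t = t0 then 0 else w t)" for t
  have dwt: "(wt has_real_derivative w' t) (at t)" if "t0 < t" "t < t2" for t
    using has_field_derivative_transform_within_open[of w "w' t" t "{t0<..<t2}" wt] wsol[OF that] that
    by (auto simp: wt_def)
  have wtc: "continuous_on {t0..e} wt"
  proof (rule continuous_on_IccI)
    show "(wt \<longlongrightarrow> wt t0) (at_right t0)"
    proof -
      have "eventually (\<lambda>t. w t = wt t) (at_right t0)"
        unfolding eventually_at_right_field using e by (intro exI[of _ e]) (auto simp: wt_def)
      then show ?thesis using Lim_transform_eventually[OF wl] by (simp add: wt_def)
    qed
    have "isCont wt e" using dwt[of e] e by (intro DERIV_isCont) auto
    then show "(wt \<longlongrightarrow> wt e) (at_left e)" by (simp add: isCont_def filterlim_at_split)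
    fix x assume "t0 < x" "x < e"
    then have "isCont wt x" using dwt[of x] e by (intro DERIV_isCont) auto
    then show "(wt \<longlongrightarrow> wt x) (at x)" by (simp add: isCont_def)
  qed (use e in auto)
  obtain \<sigma>w where Sa: "wt t0 < wt e" and Sc: "continuous_on {wt t0..wt e} \<sigma>w"
    and Sm: "\<And>t. t \<in> {wt t0..wt e} \<Longrightarrow> \<sigma>w t \<in> {t0..e} \<and> wt (\<sigma>w t) = t"
    and Si: "\<And>x. x \<in> {t0..e} \<Longrightarrow> \<sigma>w (wt x) = x"
    and Sd: "\<And>t. wt t0 < t \<Longrightarrow> t < wt e \<Longrightarrow> t0 < \<sigma>w t \<and> \<sigma>w t < e \<and> (\<sigma>w has_real_derivative inverse (w' (\<sigma>w t))) (at t)"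
    and Smono: "\<And>x y. t0 \<le> x \<Longrightarrow> x < y \<Longrightarrow> y \<le> e \<Longrightarrow> wt x < wt y"
  proof (rule inverse_phase[of t0 e wt w'])
    show "t0 < e" by (rule e)
    show "continuous_on {t0..e} wt" by (rule wtc)
    fix x assume x: "t0 < x" "x < e"
    show "(wt has_real_derivative w' x) (at x)" using dwt[of x] x e by auto
    show "w' x > 0" using b(2)[of x] x e v0_pos by auto
  qed (blast)
  have wt0: "wt t0 = 0" by (simp add: wt_def)
  define we where "we = wt e"
  have we: "0 < we" using Sa wt0 by (simp add: we_def)
  define Xw where "Xw = min we xE / 2"
  have Xw: "0 < Xw" "Xw < we" "Xw < xE" using we xE by (auto simp: Xw_def)
  define m where "m = min c1 (v0\<^sup>2 / 8)"
  have m: "0 < m" "m \<le> c1" using c1_pos v0_pos by (auto simp: m_def)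
  define A2 where "A2 x = (if x = 0 then v0\<^sup>2 / 2 else (w' (\<sigma>w x))\<^sup>2 / 2)" for x
  have sw0: "\<sigma>w 0 = t0" using Si[of t0] e wt0 by auto
  have Sin: "t0 < \<sigma>w x \<and> \<sigma>w x < e" if "0 < x" "x < we" for x using Sd[of x] that wt0 by (auto simp: we_def)
  have w'c: "isCont w' t" if "t0 < t" "t < t2" for t using wsol[OF that] by (intro DERIV_isCont) auto
  have sc_at: "isCont \<sigma>w x" if "0 < x" "x < we" for x
    using continuous_on_interior[OF Sc, of x] that wt0 by (auto simp: we_def)
  have A2big: "A2 x \<ge> v0\<^sup>2 / 8" if "0 < x" "x < we" for x
  proof -
    have "w' (\<sigma>w x) > v0 / 2" using b(2)[of "\<sigma>w x"] Sin[OF that] e by auto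
    then have "(v0 / 2)\<^sup>2 \<le> (w' (\<sigma>w x))\<^sup>2" using v0_pos by (intro power_mono) auto
    then show ?thesis using that by (simp add: A2_def power_divide)
  qed
  have ev_pos: "eventually (\<lambda>y. y > 0) (at x)" if "x > 0" for x :: real
    using order_tendstoD(1)[OF tendsto_ident_at[of x UNIV] that] by simp
  have A2c: "continuous_on {0..Xw} A2"
  proof (rule continuous_on_IccI)
    have f1: "filterlim \<sigma>w (at_right t0) (at_right 0)"
    proof -
      have "(\<sigma>w \<longlongrightarrow> \<sigma>w 0) (at_right 0)"
        using continuous_on_Icc_at_rightD[OF Sc[unfolded wt0] Sa[unfolded wt0]] .
      moreover have "eventually (\<lambda>x. \<sigma>w x \<in> {t0<..} \<and> \<sigma>w x \<noteq> t0) (at_right 0)"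
        unfolding eventually_at_right_field using we Sin by (intro exI[of _ we]) auto
      ultimately show ?thesis unfolding filterlim_at using sw0 by simp
    qed
    have "((\<lambda>x. (w' (\<sigma>w x))\<^sup>2 / 2) \<longlongrightarrow> v0\<^sup>2 / 2) (at_right 0)"
      by (intro tendsto_intros filterlim_compose[OF wl' f1]) auto
    moreover have "eventually (\<lambda>x. (w' (\<sigma>w x))\<^sup>2 / 2 = A2 x) (at_right 0)"
      unfolding eventually_at_right_field by (intro exI[of _ 1]) (auto simp: A2_def)
    ultimately show "(A2 \<longlongrightarrow> A2 0) (at_right 0)"
      using Lim_transform_eventually by (fastforce simp: A2_def)
    have ic: "isCont A2 x" if "0 < x" "x < we" for x
    proof -
      have "isCont (\<lambda>x. (w' (\<sigma>w x))\<^sup>2 / 2) x"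
        using Sin[OF that] e
        by (intro continuous_intros continuous_at_compose[of x \<sigma>w w', unfolded o_def] sc_at that w'c) auto
      then have "((\<lambda>x. (w' (\<sigma>w x))\<^sup>2 / 2) \<longlongrightarrow> A2 x) (at x)" using that by (simp add: isCont_def A2_def)
      moreover have "eventually (\<lambda>y. (w' (\<sigma>w y))\<^sup>2 / 2 = A2 y) (at x)"
        using ev_pos[OF that(1)] by eventually_elim (auto simp: A2_def)
      ultimately show ?thesis unfolding isCont_def by (rule Lim_transform_eventually)
    qed
    show "(A2 \<longlongrightarrow> A2 Xw) (at_left Xw)"
      using ic[of Xw] Xw by (simp add: isCont_def filterlim_at_split)
    fix x assume "0 < x" "x < Xw"
    then have "isCont A2 x" using ic Xw by auto
    then show "(A2 \<longlongrightarrow> A2 x) (at x)" by (simp add: isCont_def)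
  qed (use Xw in auto)
  have Scw: "continuous_on {0..Xw} \<sigma>w" using Sc wt0 Xw by (auto simp: we_def elim!: continuous_on_subset)
  define L where "L = max Lp (1 / (2 * m * sqrt (2 * m)))"
  have L: "0 \<le> L" using Lp by (auto simp: L_def le_max_iff_disj)
  define F1 where "F1 s x y = 1 / sqrt (2 * max y m)" for s x y :: real
  define F2 where "F2 s x y = p x" for s x y :: real
  have agree: "\<forall>x\<in>{0..Xw}. \<sigma>w x = \<tau>1 x \<and> A2 x = W1 x"
  proof (rule uniq_sys[where Fa=F1 and Fb=F2 and ka="\<lambda>_. 0" and kb="\<lambda>x. x powr (-\<alpha>)" and L=L])
    show "0 \<le> Xw" using Xw by simp
    show "0 \<le> L" by (rule L)
    fix s x y x' y' :: real
    have "\<bar>F1 s x y - F1 s x' y'\<bar> \<le> (1 / (2 * m * sqrt (2 * m))) * \<bar>y - y'\<bar>"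
      unfolding F1_def by (rule lip_isqrt_trunc[OF m(1)])
    also have "\<dots> \<le> L * (\<bar>x - x'\<bar> + \<bar>y - y'\<bar>)"
      using Lp unfolding L_def by (intro mult_mono) (auto simp: le_max_iff_disj)
    finally show "\<bar>F1 s x y - F1 s x' y'\<bar> \<le> L * (\<bar>x - x'\<bar> + \<bar>y - y'\<bar>)" .
    have "\<bar>F2 s x y - F2 s x' y'\<bar> \<le> Lp * \<bar>x - x'\<bar>" unfolding F2_def by (rule p_lip)
    also have "\<dots> \<le> L * (\<bar>x - x'\<bar> + \<bar>y - y'\<bar>)"
      using Lp unfolding L_def by (intro mult_mono) (auto simp: le_max_iff_disj)
    finally show "\<bar>F2 s x y - F2 s x' y'\<bar> \<le> L * (\<bar>x - x'\<bar> + \<bar>y - y'\<bar>)" .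
  next
    show "continuous_on {0..Xw} \<sigma>w" by (rule Scw)
    show "continuous_on {0..Xw} A2" by (rule A2c)
    show "continuous_on {0..Xw} \<tau>1" using P1c Xw xE by (auto elim!: continuous_on_subset)
    show "continuous_on {0..Xw} W1" using P1W Xw xE by (auto elim!: continuous_on_subset)
  next
    fix s assume s: "0 < s" "s < Xw"
    have s': "0 < s" "s < we" "s < X1" using s Xw xE by auto
    have W1m: "max (W1 s) m = W1 s" using P1c1[of s] s' m by auto
    have A2m: "max (A2 s) m = A2 s" using A2big[OF s'(1,2)] by (auto simp: m_def)
    have st: "t0 < \<sigma>w s" "\<sigma>w s < e" using Sin[OF s'(1,2)] by auto
    have wps: "w' (\<sigma>w s) > 0" using b(2)[of "\<sigma>w s"] st e v0_pos by auto
    have A2s: "A2 s = (w' (\<sigma>w s))\<^sup>2 / 2" using s by (simp add: A2_def)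
    have sqA: "sqrt (2 * A2 s) = w' (\<sigma>w s)" using wps by (simp add: A2s)
    have dsw: "(\<sigma>w has_real_derivative inverse (w' (\<sigma>w s))) (at s)" using Sd[of s] s' wt0 by (auto simp: we_def)
    show "(\<sigma>w has_real_derivative F1 s (\<sigma>w s) (A2 s) + 0) (at s)"
      using dsw by (simp add: F1_def A2m sqA divide_inverse)
    show "(\<tau>1 has_real_derivative F1 s (\<tau>1 s) (W1 s) + 0) (at s)"
      using P1dt[OF s'(1,3)] by (simp add: F1_def W1m)
    show "(W1 has_real_derivative F2 s (\<tau>1 s) (W1 s) + s powr (-\<alpha>)) (at s)"
      using P1dW[OF s'(1,3)] by (simp add: F2_def)
    have wsw: "w (\<sigma>w s) = s"
    proof -
      have "wt (\<sigma>w s) = s" using Sm[of s] s' wt0 by (auto simp: we_def)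
      then show ?thesis using st by (simp add: wt_def)
    qed
    have dw': "(w' has_real_derivative p (\<sigma>w s) + s powr (-\<alpha>)) (at (\<sigma>w s))"
      using wsol[of "\<sigma>w s"] st e wsw by auto
    have D0: "((\<lambda>x. (w' (\<sigma>w x))\<^sup>2 / 2) has_real_derivative
        (2 * w' (\<sigma>w s) * ((p (\<sigma>w s) + s powr (-\<alpha>)) * inverse (w' (\<sigma>w s))))/2) (at s)"
      using DERIV_chain2[OF dw' dsw]
      by (auto intro!: derivative_eq_intros simp: power2_eq_square)
    have eqD: "(2 * w' (\<sigma>w s) * ((p (\<sigma>w s) + s powr (-\<alpha>)) * inverse (w' (\<sigma>w s))))/2
        = F2 s (\<sigma>w s) (A2 s) + s powr (-\<alpha>)"
      using wps by (simp add: F2_def field_simps)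
    have D1: "((\<lambda>x. (w' (\<sigma>w x))\<^sup>2 / 2) has_real_derivative F2 s (\<sigma>w s) (A2 s) + s powr (-\<alpha>)) (at s)"
      using D0 unfolding eqD .
    have "eventually (\<lambda>y. 0 < y) (nhds s)" using eventually_nhds_in_open[of "{0<..}" s] s by auto
    then have ev: "eventually (\<lambda>y. (w' (\<sigma>w y))\<^sup>2 / 2 = A2 y) (nhds s)"
      by (rule eventually_mono) (auto simp: A2_def)
    show "(A2 has_real_derivative F2 s (\<sigma>w s) (A2 s) + s powr (-\<alpha>)) (at s)"
      using DERIV_cong_ev[OF refl ev refl, THEN iffD1, OF D1] .
  qed (auto simp: sw0 P10 A2_def P1W0)

  define ta where "ta = \<tau>1 Xw"
  have taP: "t0 < ta" "ta < t1" "U ta = Xw" "V ta = sqrt (2 * W1 Xw)"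
    using xEp[of Xw] Xw by (auto simp: ta_def)
  have swX: "\<sigma>w Xw = ta" using agree Xw by (auto simp: ta_def)
  have tae: "ta < e" using Sin[of Xw] Xw swX by auto
  have wta: "w ta = Xw"
  proof -
    have "wt (\<sigma>w Xw) = Xw" using Sm[of Xw] Xw wt0 by (auto simp: we_def)
    then show ?thesis using swX taP by (simp add: wt_def)
  qed
  have w'ta: "w' ta = V ta"
  proof -
    have "A2 Xw = W1 Xw" using agree Xw by auto
    then have "(w' ta)\<^sup>2 / 2 = W1 Xw" using Xw swX by (simp add: A2_def)
    moreover have "w' ta > 0" using b(2)[of ta] taP tae e v0_pos by auto
    ultimately show ?thesis using taP by (metis real_sqrt_abs abs_of_pos mult_2 field_sum_of_halves power2_eq_square times_divide_eq_right mult.commute nonzero_mult_div_cancel_left zero_neq_numeral)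
  qed
  have early: "w t = U t" if t: "t0 < t" "t \<le> ta" for t
  proof -
    have te: "t \<in> {t0..e}" using t tae by auto
    define x where "x = wt t"
    have x0: "0 < x" using Smono[of t0 t] t tae wt0 by (auto simp: x_def)
    have "wt t \<le> wt ta" using Smono[of t ta] t tae by (cases "t = ta") auto
    moreover have "wt ta = Xw" using wta taP by (simp add: wt_def)
    ultimately have x1: "x \<le> Xw" by (simp add: x_def)
    have "\<sigma>w x = t" using Si[OF te] by (simp add: x_def)
    then have "\<tau>1 x = t" using agree x0 x1 by auto
    then have "U t = x" using xEp[of x] x0 x1 Xw by auto
    then show ?thesis using t by (simp add: x_def wt_def)
  qed
  have later: "w t = U t" if t: "ta < t" "t < t1" "t < t2" for t
  proof -
    have "isCont U x \<and> isCont V x \<and> isCont w x \<and> isCont w' x" if "x \<in> {ta..t}" for x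
    proof -
      have "t0 < x" "x < t1" "x < t2" using that taP t by auto
      then show ?thesis using sol[of x] wsol[of x] by (auto intro: DERIV_isCont)
    qed
    then have Uc: "continuous_on {ta..t} U" "continuous_on {ta..t} V"
      and wc: "continuous_on {ta..t} w" "continuous_on {ta..t} w'"
      by (auto intro!: continuous_at_imp_continuous_on)
    have "\<forall>s\<in>{ta..t}. U s = w s \<and> V s = w' s"
    proof (rule uniq_true[where p=p and \<alpha>=\<alpha>, OF _ al0 Uc wc])
      show "ta \<le> t" using t by simp
      fix s
      show "s \<in> {ta..t} \<Longrightarrow> U s > 0" using sol[of s] taP t by auto
      show "s \<in> {ta..t} \<Longrightarrow> w s > 0" using wsol[of s] taP t by auto
      assume s: "ta < s" "s < t"
      show "(U has_real_derivative V s) (at s)" "(V has_real_derivative p s + U s powr (-\<alpha>)) (at s)"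
        using sol[of s] s taP t by auto
      show "(w has_real_derivative w' s) (at s)" "(w' has_real_derivative p s + w s powr (-\<alpha>)) (at s)"
        using wsol[of s] s taP t by auto
    qed (use wta taP w'ta in auto)
    then show ?thesis using t by auto
  qed
  have all: "w t = U t" if "t0 < t" "t < t1" "t < t2" for t
    using early later that by (cases "t \<le> ta") auto
  have t21: "t2 \<le> t1"
  proof (rule ccontr)
    assume "\<not> t2 \<le> t1"
    then have t12: "t1 < t2" by simp
    have "isCont w t1" using wsol[of t1] t01 t12 by (intro DERIV_isCont) auto
    then have lw: "(w \<longlongrightarrow> w t1) (at_left t1)" by (simp add: isCont_def filterlim_at_split)
    have "eventually (\<lambda>s. w s = U s) (at_left t1)"
      unfolding eventually_at_left_field using t01 t12 all by (intro exI[of _ t0]) auto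
    then have "(U \<longlongrightarrow> w t1) (at_left t1)" by (rule Lim_transform_eventually[OF lw])
    then have "w t1 = 0" using tendsto_unique[OF trivial_limit_at_left_real _ limL] by auto
    moreover have "w t1 > 0" using wsol[of t1] t01 t12 by auto
    ultimately show False by simp
  qed
  show ?thesis using t21 all by auto
qed

end

theorem lemma3p2:
  fixes \<alpha> p1 p2 t0 v0 :: real and p :: "real \<Rightarrow> real"
  assumes "0 < \<alpha>" "\<alpha> < 1"
    and "\<exists>L. L-lipschitz_on UNIV p"
    and "p2 \<le> p1" "p1 < 0"
    and "\<And>t. p2 \<le> p t \<and> p t \<le> p1"
    and "v0 > sqrt (2 * (p1 - p2) * (((\<alpha> - 1) * p1) powr (-1 / \<alpha>)))"
  shows "\<exists>t1 u u'. t0 < t1 \<and> is_solution \<alpha> p u u' t0 t1 \<and>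
           (u \<longlongrightarrow> 0) (at_right t0) \<and> (u \<longlongrightarrow> 0) (at_left t1) \<and>
           (u' \<longlongrightarrow> v0) (at_right t0) \<and>
           (\<exists>v1 < 0. (u' \<longlongrightarrow> v1) (at_left t1)) \<and>
           (\<forall>t2 w w'. t0 < t2 \<and> is_solution \<alpha> p w w' t0 t2 \<and>
              (w \<longlongrightarrow> 0) (at_right t0) \<and> (w' \<longlongrightarrow> v0) (at_right t0) \<longrightarrow>
              t2 \<le> t1 \<and> (\<forall>t\<in>{t0<..<t2}. w t = u t))"
proof -
  obtain Lp where lipp: "Lp-lipschitz_on UNIV p" using assms(3) by blast
  interpret S: setting \<alpha> p1 p2 t0 v0 Lp p
    using assms lipp by unfold_locales auto
  obtain t1 U V \<tau>1 W1 xE where t01: "t0 < t1"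
    and sol: "\<And>t. t0 < t \<Longrightarrow> t < t1 \<Longrightarrow> U t > 0 \<and> (U has_real_derivative V t) (at t) \<and>
          (V has_real_derivative p t + U t powr (-\<alpha>)) (at t)"
    and l1: "(U \<longlongrightarrow> 0) (at_right t0)" and l2: "(U \<longlongrightarrow> 0) (at_left t1)" and l3: "(V \<longlongrightarrow> v0) (at_right t0)"
    and l4: "\<exists>v1<0. (V \<longlongrightarrow> v1) (at_left t1)"
    and P1c: "continuous_on {0..S.X1} \<tau>1" and P1W: "continuous_on {0..S.X1} W1" and P10: "\<tau>1 0 = t0"
    and P1W0: "W1 0 = v0\<^sup>2 / 2"
    and P1c1: "\<And>x. x \<in> {0..S.X1} \<Longrightarrow> W1 x \<ge> S.c1"
    and P1dt: "\<And>x. 0 < x \<Longrightarrow> x < S.X1 \<Longrightarrow> (\<tau>1 has_real_derivative 1 / sqrt (2 * W1 x)) (at x)"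
    and P1dW: "\<And>x. 0 < x \<Longrightarrow> x < S.X1 \<Longrightarrow> (W1 has_real_derivative p (\<tau>1 x) + x powr (-\<alpha>)) (at x)"
    and xE: "0 < xE" "xE < S.X1"
    and xEp: "\<And>x. 0 < x \<Longrightarrow> x \<le> xE \<Longrightarrow> t0 < \<tau>1 x \<and> \<tau>1 x < t1 \<and> U (\<tau>1 x) = x \<and> V (\<tau>1 x) = sqrt (2 * W1 x)"
    by (rule S.existence) (rule that)
  have pw: "1 / (x powr \<alpha>) = x powr (-\<alpha>)" for x :: real by (simp add: powr_minus_divide)
  show ?thesis
  proof (rule exI[of _ t1], rule exI[of _ U], rule exI[of _ V], intro conjI allI impI)
    show "t0 < t1" by (rule t01)
    show "is_solution \<alpha> p U V t0 t1" unfolding is_solution_def pw using sol by auto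
    show "(U \<longlongrightarrow> 0) (at_right t0)" "(U \<longlongrightarrow> 0) (at_left t1)" "(V \<longlongrightarrow> v0) (at_right t0)"
      using l1 l2 l3 by auto
    show "\<exists>v1<0. (V \<longlongrightarrow> v1) (at_left t1)" by (fact l4)
    fix t2 w w'
    assume h: "t0 < t2 \<and> is_solution \<alpha> p w w' t0 t2 \<and> (w \<longlongrightarrow> 0) (at_right t0) \<and> (w' \<longlongrightarrow> v0) (at_right t0)"
    have wsol: "\<And>t. t0 < t \<Longrightarrow> t < t2 \<Longrightarrow> w t > 0 \<and> (w has_real_derivative w' t) (at t) \<and>
          (w' has_real_derivative p t + w t powr (-\<alpha>)) (at t)"
      using h unfolding is_solution_def pw by auto
    have res: "t2 \<le> t1 \<and> (\<forall>t\<in>{t0<..<t2}. w t = U t)"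
      by (rule S.uniqueness[OF t01 sol l2 P1c P1W P10 P1W0 P1c1 P1dt P1dW xE xEp _ wsol])
         (use h in auto)
    show "t2 \<le> t1" using res by simp
    show "\<forall>t\<in>{t0<..<t2}. w t = U t" using res by simp
  qed
qed

end
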